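(* Let $X$ be a real Banach space and let $Y\subset X^*$ be a $w^*$-dense and norm-closed linear subspace. Then the locally convex space $(X,\mu(X,Y))$ is quasi-complete if and only if it is complete.
   Context: For a $w^*$-dense linear subspace $Y\subset X^*$ (not necessarily norm-closed), $\mu(X,Y)$ denotes the Mackey topology on $X$ associated to the dual pair $\langle X,Y\rangle$, i.e. the locally convex topology on $X$ of uniform convergence on the members of the family of all absolutely convex $w^*$-compact subsets of $Y$. A locally convex space is quasi-complete if every bounded closed subset of it is complete. *)

theory Defs
  imports "HOL-Analysis.Analysis"
begin

text \<open>The dual X* of a real Banach space X is modelled by the type 'a \<Rightarrow>L real
  of bounded linear functionals (with its operator norm).\<close>

definition weak_star_topology :: "('a::real_normed_vector \<Rightarrow>\<^sub>L real) topology" where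
  "weak_star_topology =
     topology_generated_by {{f. blinfun_apply f x \<in> U} | x U. open U}"

definition absolutely_convex :: "'b::real_vector set \<Rightarrow> bool" where
  "absolutely_convex K \<longleftrightarrow>
     (\<forall>f\<in>K. \<forall>g\<in>K. \<forall>a b::real. \<bar>a\<bar> + \<bar>b\<bar> \<le> 1 \<longrightarrow> a *\<^sub>R f + b *\<^sub>R g \<in> K)"

text \<open>The family of (nonempty) absolutely convex weak-star compact subsets of Y
  (the empty set only yields the zero seminorm and is irrelevant).\<close>
definition mackey_family :: "('a::real_normed_vector \<Rightarrow>\<^sub>L real) set \<Rightarrow> ('a \<Rightarrow>\<^sub>L real) set set" where
  "mackey_family Y =
     {K. K \<subseteq> Y \<and> K \<noteq> {} \<and> absolutely_convex K \<and> compactin weak_star_topology K}"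

definition sup_seminorm :: "('a::real_normed_vector \<Rightarrow>\<^sub>L real) set \<Rightarrow> 'a \<Rightarrow> real" where
  "sup_seminorm K x = (SUP f\<in>K. \<bar>blinfun_apply f x\<bar>)"

definition mackey_topology :: "('a::real_normed_vector \<Rightarrow>\<^sub>L real) set \<Rightarrow> 'a topology" where
  "mackey_topology Y =
     topology_generated_by
       {{x. sup_seminorm K (x - x0) < e} | K x0 e. K \<in> mackey_family Y}"

text \<open>Cauchy filters and convergence of filters for mu(X,Y) (uniform structure
  given by the seminorms; filters are equivalent to nets).\<close>
definition mackey_cauchy :: "('a::real_normed_vector \<Rightarrow>\<^sub>L real) set \<Rightarrow> 'a filter \<Rightarrow> bool" where
  "mackey_cauchy Y F \<longleftrightarrow> F \<noteq> bot \<and>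
     (\<forall>K\<in>mackey_family Y. \<forall>e>0. \<exists>A. eventually (\<lambda>x. x \<in> A) F \<and>
        (\<forall>x\<in>A. \<forall>y\<in>A. sup_seminorm K (x - y) < e))"

definition mackey_converges :: "('a::real_normed_vector \<Rightarrow>\<^sub>L real) set \<Rightarrow> 'a filter \<Rightarrow> 'a \<Rightarrow> bool" where
  "mackey_converges Y F x0 \<longleftrightarrow>
     (\<forall>K\<in>mackey_family Y. \<forall>e>0. eventually (\<lambda>x. sup_seminorm K (x - x0) < e) F)"

definition mackey_complete_set :: "('a::real_normed_vector \<Rightarrow>\<^sub>L real) set \<Rightarrow> 'a set \<Rightarrow> bool" where
  "mackey_complete_set Y B \<longleftrightarrow>
     (\<forall>F. mackey_cauchy Y F \<and> eventually (\<lambda>x. x \<in> B) F \<longrightarrow>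
          (\<exists>x0\<in>B. mackey_converges Y F x0))"

definition mackey_bounded :: "('a::real_normed_vector \<Rightarrow>\<^sub>L real) set \<Rightarrow> 'a set \<Rightarrow> bool" where
  "mackey_bounded Y B \<longleftrightarrow> (\<forall>K\<in>mackey_family Y. \<exists>M. \<forall>x\<in>B. sup_seminorm K x \<le> M)"

definition mackey_complete :: "('a::real_normed_vector \<Rightarrow>\<^sub>L real) set \<Rightarrow> bool" where
  "mackey_complete Y \<longleftrightarrow> mackey_complete_set Y UNIV"

definition mackey_quasi_complete :: "('a::real_normed_vector \<Rightarrow>\<^sub>L real) set \<Rightarrow> bool" where
  "mackey_quasi_complete Y \<longleftrightarrow>
     (\<forall>B. mackey_bounded Y B \<and> closedin (mackey_topology Y) B \<longrightarrow> mackey_complete_set Y B)"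

end

theory Submission
  imports Defs
begin

definition sublin :: "('v::real_vector \<Rightarrow> real) \<Rightarrow> bool" where
  "sublin q \<longleftrightarrow> (\<forall>x y. q (x + y) \<le> q x + q y) \<and> (\<forall>c x. c \<ge> 0 \<longrightarrow> q (c *\<^sub>R x) = c * q x)"

lemma sublin_zero: "sublin q \<Longrightarrow> q 0 = 0"
  unfolding sublin_def by (metis mult_zero_left order_refl scaleR_zero_left)

lemma sublin_add: "sublin q \<Longrightarrow> q (x + y) \<le> q x + q y"
  unfolding sublin_def by blast

lemma sublin_scale: "sublin q \<Longrightarrow> c \<ge> 0 \<Longrightarrow> q (c *\<^sub>R x) = c * q x"
  unfolding sublin_def by blast

lemma sublin_neg: "sublin q \<Longrightarrow> - q (- x) \<le> q x"
proof -
  assume q: "sublin q"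
  have "q (x + - x) \<le> q x + q (- x)" by (rule sublin_add[OF q])
  then show ?thesis using sublin_zero[OF q] by simp
qed

definition tq :: "('v::real_vector \<Rightarrow> real) \<Rightarrow> 'v \<Rightarrow> 'v \<Rightarrow> real" where
  "tq q z x = Inf ((\<lambda>t. q (x + t *\<^sub>R z) - t * q z) ` {0..})"

lemma tq_bdd:
  assumes q: "sublin q"
  shows "bdd_below ((\<lambda>t. q (x + t *\<^sub>R z) - t * q z) ` {0..})"
    and "t \<ge> 0 \<Longrightarrow> - q (- x) \<le> q (x + t *\<^sub>R z) - t * q z"
proof -
  have *: "- q (- x) \<le> q (x + t *\<^sub>R z) - t * q z" if "t \<ge> 0" for t
  proof -
    have "q (t *\<^sub>R z) \<le> q (x + t *\<^sub>R z) + q (- x)"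
      using sublin_add[OF q, of "x + t *\<^sub>R z" "- x"] by simp
    then show ?thesis using sublin_scale[OF q that] by simp
  qed
  show "bdd_below ((\<lambda>t. q (x + t *\<^sub>R z) - t * q z) ` {0..})"
    using * by (intro bdd_belowI[where m="- q (- x)"]) auto
  show "t \<ge> 0 \<Longrightarrow> - q (- x) \<le> q (x + t *\<^sub>R z) - t * q z" by (rule *)
qed

lemma tq_le: "sublin q \<Longrightarrow> t \<ge> 0 \<Longrightarrow> tq q z x \<le> q (x + t *\<^sub>R z) - t * q z"
  unfolding tq_def by (intro cInf_lower tq_bdd) auto

lemma tq_ge: "sublin q \<Longrightarrow> - q (- x) \<le> tq q z x"
  unfolding tq_def by (intro cInf_greatest) (auto intro: tq_bdd(2))

lemma tq_below: "sublin q \<Longrightarrow> tq q z x \<le> q x"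
  using tq_le[of q 0 z x] by simp

lemma tq_sublin:
  assumes q: "sublin q"
  shows "sublin (tq q z)"
  unfolding sublin_def
proof (intro conjI allI impI)
  fix x y
  have "tq q z (x + y) \<le> (q (x + s *\<^sub>R z) - s * q z) + (q (y + t *\<^sub>R z) - t * q z)"
    if "s \<ge> 0" "t \<ge> 0" for s t
  proof -
    have "tq q z (x + y) \<le> q (x + y + (s + t) *\<^sub>R z) - (s + t) * q z"
      using tq_le[OF q, of "s + t"] that by simp
    also have "q (x + y + (s + t) *\<^sub>R z) \<le> q (x + s *\<^sub>R z) + q (y + t *\<^sub>R z)"
      using sublin_add[OF q, of "x + s *\<^sub>R z" "y + t *\<^sub>R z"]
      by (simp add: algebra_simps scaleR_add_left)
    finally show ?thesis by (simp add: algebra_simps)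
  qed
  then have "tq q z (x + y) - (q (y + t *\<^sub>R z) - t * q z) \<le> tq q z x" if "t \<ge> 0" for t
    unfolding tq_def[of q z x] using that
    by (intro cInf_greatest) (auto simp: algebra_simps)
  then have "tq q z (x + y) - tq q z x \<le> tq q z y"
    unfolding tq_def[of q z y]
    by (intro cInf_greatest) (auto simp: algebra_simps)
  then show "tq q z (x + y) \<le> tq q z x + tq q z y" by simp
next
  fix c :: real and x
  assume c: "c \<ge> 0"
  show "tq q z (c *\<^sub>R x) = c * tq q z x"
  proof (cases "c = 0")
    case True
    have "tq q z 0 = 0"
    proof (rule antisym)
      show "tq q z 0 \<le> 0" using tq_le[OF q, of 0 z 0] sublin_zero[OF q] by simp
      show "0 \<le> tq q z 0" using tq_ge[OF q, of 0 z] sublin_zero[OF q] by simp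
    qed
    then show ?thesis using True by simp
  next
    case False
    then have cp: "c > 0" using c by simp
    have "(\<lambda>t. q (c *\<^sub>R x + t *\<^sub>R z) - t * q z) ` {0..} = (\<lambda>s. c * s) ` ((\<lambda>t. q (x + t *\<^sub>R z) - t * q z) ` {0..})"
    proof -
      have e: "q (c *\<^sub>R x + t *\<^sub>R z) - t * q z = c * (q (x + (t / c) *\<^sub>R z) - (t / c) * q z)" for t
      proof -
        have "c *\<^sub>R x + t *\<^sub>R z = c *\<^sub>R (x + (t / c) *\<^sub>R z)" using cp by (simp add: algebra_simps)
        then have "q (c *\<^sub>R x + t *\<^sub>R z) = c * q (x + (t / c) *\<^sub>R z)" using sublin_scale[OF q c] by simp
        then show ?thesis using cp by (simp add: algebra_simps)
      qed
      show ?thesis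
      proof (rule set_eqI, rule iffI)
        fix v assume "v \<in> (\<lambda>t. q (c *\<^sub>R x + t *\<^sub>R z) - t * q z) ` {0..}"
        then obtain t where t: "t \<ge> 0" "v = q (c *\<^sub>R x + t *\<^sub>R z) - t * q z" by auto
        have w: "q (x + (t / c) *\<^sub>R z) - (t / c) * q z \<in> (\<lambda>t. q (x + t *\<^sub>R z) - t * q z) ` {0..}"
          using t cp by (intro image_eqI[where x="t / c"]) auto
        have "v = c * (q (x + (t / c) *\<^sub>R z) - (t / c) * q z)" using t(2) e[of t] by simp
        then show "v \<in> (\<lambda>s. c * s) ` ((\<lambda>t. q (x + t *\<^sub>R z) - t * q z) ` {0..})"
          using w by blast
      next
        fix v assume "v \<in> (\<lambda>s. c * s) ` ((\<lambda>t. q (x + t *\<^sub>R z) - t * q z) ` {0..})"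
        then obtain t where t: "t \<ge> 0" "v = c * (q (x + t *\<^sub>R z) - t * q z)" by auto
        then show "v \<in> (\<lambda>t. q (c *\<^sub>R x + t *\<^sub>R z) - t * q z) ` {0..}"
          using e[of "c * t"] cp by (auto intro!: image_eqI[where x="c * t"])
      qed
    qed
    moreover have "Inf ((\<lambda>s. c * s) ` S) = c * Inf S" if "S \<noteq> {}" "bdd_below S" for S :: "real set"
    proof -
      have "mono (\<lambda>s. c * s)" using c by (auto simp: mono_def mult_left_mono)
      moreover have "continuous (at_right (Inf S)) (\<lambda>s. c * s)"
        by (intro continuous_intros)
      ultimately show ?thesis
        using continuous_at_Inf_mono[of "\<lambda>s. c * s" S] that by simp
    qed
    ultimately show ?thesis unfolding tq_def
      using tq_bdd(1)[OF q, of x z] by simp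
  qed
qed

lemma sublin_min_linear:
  assumes q: "sublin q" and minimal: "\<And>z. tq q z = q"
  shows "linear q"
proof -
  have add: "q (x + z) = q x + q z" for x z
  proof -
    have "q x \<le> q (x + z) - q z" using tq_le[OF q, of 1 z x] minimal[of z] by simp
    then show ?thesis using sublin_add[OF q, of x z] by simp
  qed
  have neg: "q (- x) = - q x" for x
    using add[of x "- x"] sublin_zero[OF q] by simp
  have sc: "q (c *\<^sub>R x) = c * q x" for c x
  proof (cases "c \<ge> 0")
    case True then show ?thesis using sublin_scale[OF q] by simp
  next
    case False
    then have "q (c *\<^sub>R x) = - q ((- c) *\<^sub>R x)" using neg[of "(- c) *\<^sub>R x"] by simp
    also have "\<dots> = c * q x" using sublin_scale[OF q, of "- c" x] False by simp
    finally show ?thesis .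
  qed
  show ?thesis by (rule linearI) (use add sc in auto)
qed

lemma sublin_minimal_exists:
  fixes p :: "'v::real_vector \<Rightarrow> real"
  assumes p: "sublin p"
  shows "\<exists>q. sublin q \<and> (\<forall>x. q x \<le> p x) \<and> (\<forall>q'. sublin q' \<and> (\<forall>x. q' x \<le> q x) \<longrightarrow> q' = q)"
proof -
  define A where "A = {q. sublin q \<and> (\<forall>x. q x \<le> p x)}"
  define P where "P = (\<lambda>q1 q2 :: 'v \<Rightarrow> real. \<forall>x. q2 x \<le> q1 x)"
  have po: "partial_order_on A (relation_of P A)"
    unfolding P_def
    by (rule partial_order_on_relation_ofI) (auto intro: order_trans antisym, rule ext, meson antisym)
  have ch: "\<exists>u\<in>A. \<forall>a\<in>C. P a u" if C: "C \<in> Chains (relation_of P A)" for C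
  proof (cases "C = {}")
    case True
    then show ?thesis using p unfolding A_def by auto
  next
    case False
    have CA: "C \<subseteq> A" using C unfolding Chains_def relation_of_def by auto
    have tot: "P a b \<or> P b a" if "a \<in> C" "b \<in> C" for a b
      using C that unfolding Chains_def relation_of_def by auto
    define u where "u = (\<lambda>x. Inf ((\<lambda>q. q x) ` C))"
    have sl: "sublin q" and qp: "q x \<le> p x" if "q \<in> C" for q x
      using CA that unfolding A_def by auto
    have lb: "- p (- x) \<le> q x" if "q \<in> C" for q x
      using sublin_neg[OF sl[OF that], of x] qp[OF that, of "- x"] by simp
    have bdd: "bdd_below ((\<lambda>q. q x) ` C)" for x
      using lb by (intro bdd_belowI[where m="- p (- x)"]) auto
    have ule: "u x \<le> q x" if "q \<in> C" for q x
      unfolding u_def using that bdd by (intro cInf_lower) auto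
    have uge: "m \<le> u x" if "\<And>q. q \<in> C \<Longrightarrow> m \<le> q x" for m x
      unfolding u_def using that False by (intro cInf_greatest) auto
    have "sublin u"
      unfolding sublin_def
    proof (intro conjI allI impI)
      fix x y
      have "u (x + y) \<le> q1 x + q2 y" if "q1 \<in> C" "q2 \<in> C" for q1 q2
      proof (cases "P q1 q2")
        case True
        then have "u (x + y) \<le> q2 (x + y)" using ule that by auto
        also have "\<dots> \<le> q2 x + q2 y" using sublin_add[OF sl[OF that(2)]] .
        also have "\<dots> \<le> q1 x + q2 y" using True unfolding P_def by auto
        finally show ?thesis .
      next
        case False
        then have T: "P q2 q1" using tot that by auto
        then have "u (x + y) \<le> q1 (x + y)" using ule that by auto
        also have "\<dots> \<le> q1 x + q1 y" using sublin_add[OF sl[OF that(1)]] .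
        also have "\<dots> \<le> q1 x + q2 y" using T unfolding P_def by auto
        finally show ?thesis .
      qed
      then have "u (x + y) - q2 y \<le> u x" if "q2 \<in> C" for q2
        using that by (intro uge) (auto simp: algebra_simps)
      then have "u (x + y) - u x \<le> u y"
        by (intro uge) (auto simp: algebra_simps)
      then show "u (x + y) \<le> u x + u y" by simp
    next
      fix c :: real and x assume c: "c \<ge> 0"
      have "\<forall>q\<in>C. q (c *\<^sub>R x) = c * q x" using sl sublin_scale c by blast
      then have e: "(\<lambda>q. q (c *\<^sub>R x)) ` C = (\<lambda>s. c * s) ` ((\<lambda>q. q x) ` C)"
        by (auto simp: image_image)
      have "mono (\<lambda>s. c * s)" using c by (auto simp: mono_def mult_left_mono)
      moreover have "continuous (at_right (Inf ((\<lambda>q. q x) ` C))) (\<lambda>s. c * s)"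
        by (intro continuous_intros)
      ultimately show "u (c *\<^sub>R x) = c * u x"
        unfolding u_def e using continuous_at_Inf_mono[of "\<lambda>s. c * s" "(\<lambda>q. q x) ` C"] bdd False by simp
    qed
    moreover have "u x \<le> p x" for x
    proof -
      obtain q where "q \<in> C" using False by auto
      then show ?thesis using ule qp by (meson order_trans)
    qed
    ultimately have "u \<in> A" unfolding A_def by auto
    moreover have "\<forall>a\<in>C. P a u" unfolding P_def using ule by auto
    ultimately show ?thesis by blast
  qed
  obtain m where m: "m \<in> A" "\<And>a. a \<in> A \<Longrightarrow> P m a \<Longrightarrow> a = m"
    using predicate_Zorn[OF po ch] by blast
  show ?thesis
  proof (intro exI[of _ m] conjI allI impI)
    show "sublin m" "\<And>x. m x \<le> p x" using m(1) unfolding A_def by auto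
    fix q' assume "sublin q' \<and> (\<forall>x. q' x \<le> m x)"
    then show "q' = m" using m(2)[of q'] m(1) unfolding A_def P_def by (auto intro: order_trans)
  qed
qed

theorem hahn_banach_point:
  fixes p :: "'v::real_vector \<Rightarrow> real"
  assumes p: "sublin p"
  shows "\<exists>l. linear l \<and> (\<forall>x. l x \<le> p x) \<and> l a = p a"
proof -
  have p0: "sublin (tq p a)" by (rule tq_sublin[OF p])
  obtain q where q: "sublin q" "\<And>x. q x \<le> tq p a x"
    and mn: "\<And>q'. sublin q' \<Longrightarrow> (\<forall>x. q' x \<le> q x) \<Longrightarrow> q' = q"
    using sublin_minimal_exists[OF p0] by blast
  have "tq q z = q" for z
    using mn[OF tq_sublin[OF q(1)]] tq_below[OF q(1)] by blast
  then have lin: "linear q" by (rule sublin_min_linear[OF q(1)])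
  have qp: "q x \<le> p x" for x using q(2)[of x] tq_below[OF p, of a x] by simp
  have "q (- a) \<le> - p a"
    using q(2)[of "- a"] tq_le[OF p, of 1 a "- a"] sublin_zero[OF p] by simp
  then have "q a \<ge> p a" using linear_neg[OF lin, of a] by simp
  with qp[of a] have "q a = p a" by simp
  then show ?thesis using lin qp by blast
qed

lemma lin_comb_of_kernel:
  fixes f :: "'i \<Rightarrow> 'v::real_vector \<Rightarrow> real" and l :: "'v \<Rightarrow> real"
  assumes "finite S" and "\<And>s. s \<in> S \<Longrightarrow> linear (f s)" and "linear l"
    and "\<And>v. (\<forall>s\<in>S. f s v = 0) \<Longrightarrow> l v = 0"
  shows "\<exists>c. \<forall>v. l v = (\<Sum>s\<in>S. c s * f s v)"
  using assms
proof (induction S arbitrary: l rule: finite_induct)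
  case empty
  then show ?case by auto
next
  case (insert s S)
  have lf: "linear (f t)" if "t \<in> S" for t using insert.prems(1) that by auto
  have fs: "linear (f s)" using insert.prems(1) by auto
  show ?case
  proof (cases "\<forall>v. (\<forall>t\<in>S. f t v = 0) \<longrightarrow> f s v = 0")
    case True
    then have "l v = 0" if "\<forall>t\<in>S. f t v = 0" for v
      using insert.prems(3) that by auto
    then obtain c where c: "\<forall>v. l v = (\<Sum>t\<in>S. c t * f t v)"
      using insert.IH[OF lf insert.prems(2)] by blast
    show ?thesis
    proof (intro exI[of _ "c(s := 0)"] allI)
      fix v
      have "(\<Sum>t\<in>insert s S. (c(s := 0)) t * f t v) = (\<Sum>t\<in>S. (c(s := 0)) t * f t v)"
        using insert.hyps by (simp add: sum.insert)
      also have "\<dots> = (\<Sum>t\<in>S. c t * f t v)"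
        using insert.hyps by (intro sum.cong) auto
      finally show "l v = (\<Sum>t\<in>insert s S. (c(s := 0)) t * f t v)" using c by simp
    qed
  next
    case False
    then obtain w where w: "\<forall>t\<in>S. f t w = 0" "f s w \<noteq> 0" by auto
    define w0 where "w0 = (1 / f s w) *\<^sub>R w"
    have w0: "\<forall>t\<in>S. f t w0 = 0" "f s w0 = 1"
      using w lf fs unfolding w0_def by (auto simp: linear_scale)
    define l' where "l' = (\<lambda>v. l v - l w0 * f s v)"
    have ll': "linear l'" unfolding l'_def
      by (rule linearI) (auto simp: linear_add[OF insert.prems(2)] linear_add[OF fs]
          linear_scale[OF insert.prems(2)] linear_scale[OF fs] algebra_simps)
    have "l' v = 0" if v: "\<forall>t\<in>S. f t v = 0" for v
    proof -
      define v' where "v' = v - f s v *\<^sub>R w0"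
      have "\<forall>t\<in>insert s S. f t v' = 0"
        using v w0 lf fs unfolding v'_def by (auto simp: linear_diff linear_scale)
      then have "l v' = 0" using insert.prems(3) by blast
      then show ?thesis unfolding l'_def v'_def
        using insert.prems(2) by (simp add: linear_diff linear_scale)
    qed
    then obtain c where c: "\<forall>v. l' v = (\<Sum>t\<in>S. c t * f t v)"
      using insert.IH[OF lf ll'] by blast
    show ?thesis
    proof (intro exI[of _ "c(s := l w0)"] allI)
      fix v
      have "(\<Sum>t\<in>insert s S. (c(s := l w0)) t * f t v) = l w0 * f s v + (\<Sum>t\<in>S. (c(s := l w0)) t * f t v)"
        using insert.hyps by (simp add: sum.insert)
      also have "(\<Sum>t\<in>S. (c(s := l w0)) t * f t v) = (\<Sum>t\<in>S. c t * f t v)"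
        using insert.hyps by (intro sum.cong) auto
      finally show "l v = (\<Sum>t\<in>insert s S. (c(s := l w0)) t * f t v)"
        using c unfolding l'_def by (metis add.commute diff_add_cancel)
    qed
  qed
qed

abbreviation W where "W \<equiv> weak_star_topology"

lemma topspace_W [simp]: "topspace (weak_star_topology :: ('a::real_normed_vector \<Rightarrow>\<^sub>L real) topology) = UNIV"
  unfolding weak_star_topology_def by (auto simp: topology_generated_by_topspace)

lemma openin_W_basic: "open U \<Longrightarrow> openin weak_star_topology {f :: 'a::real_normed_vector \<Rightarrow>\<^sub>L real. blinfun_apply f x \<in> U}"
  unfolding weak_star_topology_def by (rule topology_generated_by_Basis) blast

lemma cont_eval_W: "continuous_map (weak_star_topology :: ('a::real_normed_vector \<Rightarrow>\<^sub>L real) topology) euclidean (\<lambda>f. blinfun_apply f x)"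
  unfolding continuous_map by (auto intro: openin_W_basic)

lemma cont_id_norm_W: "continuous_map euclidean (weak_star_topology :: ('a::real_normed_vector \<Rightarrow>\<^sub>L real) topology) id"
  unfolding weak_star_topology_def
proof (rule continuous_on_generated_topo)
  fix U assume "U \<in> {{f :: 'a \<Rightarrow>\<^sub>L real. blinfun_apply f x \<in> U} | x U. open U}"
  then obtain x V where U: "U = {f. blinfun_apply f x \<in> V}" "open V" by auto
  have "continuous_on UNIV (\<lambda>f :: 'a \<Rightarrow>\<^sub>L real. blinfun_apply f x)"
    by (intro linear_continuous_on blinfun.bounded_linear_left)
  then have "open ((\<lambda>f :: 'a \<Rightarrow>\<^sub>L real. blinfun_apply f x) -` V)"
    using U(2) by (simp add: open_vimage)
  then show "openin euclidean (id -` U \<inter> topspace euclidean)" using U by (simp add: vimage_def)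
qed (auto simp: weak_star_topology_def)

lemma compact_imp_compactin_W:
  fixes K :: "('a::real_normed_vector \<Rightarrow>\<^sub>L real) set"
  shows "compact K \<Longrightarrow> compactin weak_star_topology K"
  using image_compactin[OF _ cont_id_norm_W, of K] by simp

lemma compactin_W_eval:
  fixes K :: "('a::real_normed_vector \<Rightarrow>\<^sub>L real) set"
  assumes "compactin weak_star_topology K"
  shows "compact ((\<lambda>f. blinfun_apply f x) ` K)"
  using image_compactin[OF assms cont_eval_W] by simp

lemma compactin_W_bound:
  fixes K :: "('a::real_normed_vector \<Rightarrow>\<^sub>L real) set"
  assumes "compactin weak_star_topology K"
  shows "bdd_above ((\<lambda>f. \<bar>blinfun_apply f x\<bar>) ` K)"
proof -
  have "bounded ((\<lambda>f. blinfun_apply f x) ` K)"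
    using compactin_W_eval[OF assms] compact_imp_bounded by blast
  then obtain M where "\<forall>v\<in>(\<lambda>f. blinfun_apply f x) ` K. norm v \<le> M"
    unfolding bounded_iff by blast
  then show ?thesis by (intro bdd_aboveI[where M=M]) auto
qed

lemma compactin_W_lt:
  fixes K :: "('a::real_normed_vector \<Rightarrow>\<^sub>L real) set"
  assumes "compactin weak_star_topology K" "K \<noteq> {}" "\<And>f. f \<in> K \<Longrightarrow> blinfun_apply f x < c"
  shows "\<exists>c'<c. \<forall>f\<in>K. blinfun_apply f x \<le> c'"
proof -
  obtain f0 where "f0 \<in> K" "\<forall>f\<in>K. blinfun_apply f x \<le> blinfun_apply f0 x"
    using compact_attains_sup[OF compactin_W_eval[OF assms(1)], of] assms(2) by fastforce
  then show ?thesis using assms(3) by blast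
qed

definition pb :: "('a::real_normed_vector \<Rightarrow>\<^sub>L real) set \<Rightarrow> bool" where
  "pb K \<longleftrightarrow> K \<noteq> {} \<and> (\<forall>x. bdd_above ((\<lambda>f. \<bar>blinfun_apply f x\<bar>) ` K))"

lemma psn_ge: "pb K \<Longrightarrow> f \<in> K \<Longrightarrow> \<bar>blinfun_apply f x\<bar> \<le> sup_seminorm K x"
  unfolding sup_seminorm_def pb_def by (intro cSUP_upper) auto

lemma psn_le: "pb K \<Longrightarrow> (\<And>f. f \<in> K \<Longrightarrow> \<bar>blinfun_apply f x\<bar> \<le> M) \<Longrightarrow> sup_seminorm K x \<le> M"
  unfolding sup_seminorm_def pb_def by (intro cSUP_least) auto

lemma psn_nonneg: "pb K \<Longrightarrow> 0 \<le> sup_seminorm K x"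
  using psn_ge[of K _ x] unfolding pb_def by (meson abs_ge_zero all_not_in_conv order_trans)

lemma psn_triangle: "pb K \<Longrightarrow> sup_seminorm K (x + y) \<le> sup_seminorm K x + sup_seminorm K y"
proof (rule psn_le)
  fix f assume "pb K" "f \<in> K"
  then have "\<bar>blinfun_apply f x\<bar> \<le> sup_seminorm K x" "\<bar>blinfun_apply f y\<bar> \<le> sup_seminorm K y"
    by (auto intro: psn_ge)
  then show "\<bar>blinfun_apply f (x + y)\<bar> \<le> sup_seminorm K x + sup_seminorm K y"
    by (simp add: blinfun.add_right)
qed

lemma psn_scale: "pb K \<Longrightarrow> sup_seminorm K (c *\<^sub>R x) \<le> \<bar>c\<bar> * sup_seminorm K x"
proof (rule psn_le)
  fix f assume "pb K" "f \<in> K"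
  then have "\<bar>blinfun_apply f x\<bar> \<le> sup_seminorm K x" by (auto intro: psn_ge)
  then show "\<bar>blinfun_apply f (c *\<^sub>R x)\<bar> \<le> \<bar>c\<bar> * sup_seminorm K x"
    by (simp add: blinfun.scaleR_right abs_mult mult_left_mono)
qed

lemma psn_minus: "pb K \<Longrightarrow> sup_seminorm K (- x) = sup_seminorm K x"
proof -
  assume K: "pb K"
  show ?thesis
  proof (rule antisym)
    show "sup_seminorm K (- x) \<le> sup_seminorm K x"
      using psn_scale[OF K, of "-1" x] by simp
    show "sup_seminorm K x \<le> sup_seminorm K (- x)"
      using psn_scale[OF K, of "-1" "- x"] by simp
  qed
qed

lemma psn_commute: "pb K \<Longrightarrow> sup_seminorm K (x - y) = sup_seminorm K (y - x)"
  using psn_minus[of K "x - y"] by simp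

lemma psn_tri3: "pb K \<Longrightarrow> sup_seminorm K (x - z) \<le> sup_seminorm K (x - y) + sup_seminorm K (y - z)"
  using psn_triangle[of K "x - y" "y - z"] by simp

lemma psn_mono: "pb K' \<Longrightarrow> K \<subseteq> K' \<Longrightarrow> K \<noteq> {} \<Longrightarrow> sup_seminorm K x \<le> sup_seminorm K' x"
proof -
  assume a: "pb K'" "K \<subseteq> K'" "K \<noteq> {}"
  then have "pb K" unfolding pb_def using bdd_above_mono[OF _ image_mono[OF a(2)]] by (meson order_refl)
  show ?thesis
  proof (rule psn_le[OF \<open>pb K\<close>])
    fix f assume "f \<in> K"
    then show "\<bar>blinfun_apply f x\<bar> \<le> sup_seminorm K' x" using psn_ge[OF a(1)] a(2) by blast
  qed
qed

lemma family_pb: "K \<in> mackey_family Y \<Longrightarrow> pb K"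
proof -
  assume "K \<in> mackey_family Y"
  then have "compactin weak_star_topology K" "K \<noteq> {}" unfolding mackey_family_def by auto
  then show ?thesis unfolding pb_def using compactin_W_bound[of K] by auto
qed

lemma family_ac: "K \<in> mackey_family Y \<Longrightarrow> f \<in> K \<Longrightarrow> g \<in> K \<Longrightarrow> \<bar>a\<bar> + \<bar>b\<bar> \<le> 1 \<Longrightarrow> a *\<^sub>R f + b *\<^sub>R g \<in> K"
  unfolding mackey_family_def absolutely_convex_def by blast

lemma family_zero: "K \<in> mackey_family Y \<Longrightarrow> 0 \<in> K"
proof -
  assume K: "K \<in> mackey_family Y"
  then obtain f where f: "f \<in> K" unfolding mackey_family_def by auto
  have "(0::real) *\<^sub>R f + (0::real) *\<^sub>R f \<in> K"
    by (rule family_ac[OF K f f]) simp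
  then show ?thesis by simp
qed

lemma family_neg: "K \<in> mackey_family Y \<Longrightarrow> f \<in> K \<Longrightarrow> - f \<in> K"
proof -
  assume K: "K \<in> mackey_family Y" and f: "f \<in> K"
  have "(-1::real) *\<^sub>R f + (0::real) *\<^sub>R f \<in> K"
    by (rule family_ac[OF K f f]) simp
  then show ?thesis by simp
qed

definition seg :: "('a::real_normed_vector \<Rightarrow>\<^sub>L real) \<Rightarrow> ('a \<Rightarrow>\<^sub>L real) set" where
  "seg y = (\<lambda>t. t *\<^sub>R y) ` {-1..1}"

lemma seg_family:
  fixes Y :: "('a::real_normed_vector \<Rightarrow>\<^sub>L real) set"
  assumes Y: "subspace Y" and y: "y \<in> Y"
  shows "seg y \<in> mackey_family Y"
  unfolding mackey_family_def
proof (intro CollectI conjI)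
  show "seg y \<subseteq> Y" unfolding seg_def using Y y by (auto intro: subspace_scale)
  show "seg y \<noteq> {}" unfolding seg_def by auto
  show "absolutely_convex (seg y)"
    unfolding absolutely_convex_def seg_def
  proof (intro ballI allI impI)
    fix f g and a b :: real
    assume f: "f \<in> (\<lambda>t. t *\<^sub>R y) ` {-1..1}" and g: "g \<in> (\<lambda>t. t *\<^sub>R y) ` {-1..1}"
      and ab: "\<bar>a\<bar> + \<bar>b\<bar> \<le> 1"
    obtain s t where st: "f = s *\<^sub>R y" "g = t *\<^sub>R y" "\<bar>s\<bar> \<le> 1" "\<bar>t\<bar> \<le> 1"
      using f g by (auto simp del: scaleR_cancel_right)
    have "\<bar>a * s + b * t\<bar> \<le> \<bar>a\<bar> * \<bar>s\<bar> + \<bar>b\<bar> * \<bar>t\<bar>"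
      by (metis abs_mult abs_triangle_ineq)
    also have "\<dots> \<le> \<bar>a\<bar> + \<bar>b\<bar>"
      using st(3,4) by (intro add_mono) (auto intro: mult_left_le)
    finally have "\<bar>a * s + b * t\<bar> \<le> 1" using ab by simp
    moreover have "a *\<^sub>R f + b *\<^sub>R g = (a * s + b * t) *\<^sub>R y"
      using st by (simp add: algebra_simps)
    ultimately show "a *\<^sub>R f + b *\<^sub>R g \<in> (\<lambda>t. t *\<^sub>R y) ` {-1..1}"
      by (auto simp: abs_le_iff)
  qed
  show "compactin weak_star_topology (seg y)"
    unfolding seg_def
    by (intro compact_imp_compactin_W compact_continuous_image continuous_intros) auto
qed

lemma seg_psn:
  fixes Y :: "('a::real_normed_vector \<Rightarrow>\<^sub>L real) set"
  assumes Y: "subspace Y" and y: "y \<in> Y"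
  shows "sup_seminorm (seg y) x = \<bar>blinfun_apply y x\<bar>"
proof -
  have pb: "pb (seg y)" using family_pb[OF seg_family[OF Y y]] .
  show ?thesis
  proof (rule antisym)
    show "sup_seminorm (seg y) x \<le> \<bar>blinfun_apply y x\<bar>"
    proof (rule psn_le[OF pb])
      fix f assume "f \<in> seg y"
      then obtain t where "f = t *\<^sub>R y" "\<bar>t\<bar> \<le> 1" unfolding seg_def by (auto simp del: scaleR_cancel_right)
      then show "\<bar>blinfun_apply f x\<bar> \<le> \<bar>blinfun_apply y x\<bar>"
        by (simp add: abs_mult mult_left_le_one_le blinfun.scaleR_left)
    qed
    show "\<bar>blinfun_apply y x\<bar> \<le> sup_seminorm (seg y) x"
      by (rule psn_ge[OF pb]) (auto simp: seg_def intro!: image_eqI[where x=1])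
  qed
qed

definition ksum :: "('a::real_normed_vector \<Rightarrow>\<^sub>L real) set \<Rightarrow> ('a \<Rightarrow>\<^sub>L real) set \<Rightarrow> ('a \<Rightarrow>\<^sub>L real) set" where
  "ksum K1 K2 = (\<lambda>p. fst p + snd p) ` (K1 \<times> K2)"

lemma cont_add_W:
  "continuous_map (prod_topology weak_star_topology weak_star_topology) (weak_star_topology :: ('a::real_normed_vector \<Rightarrow>\<^sub>L real) topology) (\<lambda>p. fst p + snd p)"
proof -
  have "continuous_map (prod_topology weak_star_topology weak_star_topology) (topology_generated_by {{f :: 'a \<Rightarrow>\<^sub>L real. blinfun_apply f x \<in> U} | x U. open U}) (\<lambda>p. fst p + snd p)"
  proof (rule continuous_on_generated_topo)
    fix U assume "U \<in> {{f :: 'a \<Rightarrow>\<^sub>L real. blinfun_apply f x \<in> U} | x U. open U}"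
    then obtain x V where U: "U = {f. blinfun_apply f x \<in> V}" "open V" by auto
    have c1: "continuous_map (prod_topology weak_star_topology weak_star_topology) euclidean (\<lambda>p :: ('a \<Rightarrow>\<^sub>L real) \<times> ('a \<Rightarrow>\<^sub>L real). blinfun_apply (fst p) x)"
      using continuous_map_compose[OF continuous_map_fst cont_eval_W] by (simp add: o_def)
    have c2: "continuous_map (prod_topology weak_star_topology weak_star_topology) euclidean (\<lambda>p :: ('a \<Rightarrow>\<^sub>L real) \<times> ('a \<Rightarrow>\<^sub>L real). blinfun_apply (snd p) x)"
      using continuous_map_compose[OF continuous_map_snd cont_eval_W] by (simp add: o_def)
    have "openin (prod_topology weak_star_topology weak_star_topology)
        {p \<in> topspace (prod_topology weak_star_topology weak_star_topology). blinfun_apply (fst p) x + blinfun_apply (snd p) x \<in> V}"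
      by (rule openin_continuous_map_preimage[OF continuous_map_add[OF c1 c2]]) (use U in auto)
    then show "openin (prod_topology weak_star_topology weak_star_topology)
        ((\<lambda>p. fst p + snd p) -` U \<inter> topspace (prod_topology weak_star_topology weak_star_topology))"
      using U by (simp add: vimage_def blinfun.add_left Int_def conj_commute)
  qed auto
  then show ?thesis unfolding weak_star_topology_def .
qed

lemma ksum_family:
  fixes Y :: "('a::real_normed_vector \<Rightarrow>\<^sub>L real) set"
  assumes Y: "subspace Y" and K1: "K1 \<in> mackey_family Y" and K2: "K2 \<in> mackey_family Y"
  shows "ksum K1 K2 \<in> mackey_family Y" "K1 \<subseteq> ksum K1 K2" "K2 \<subseteq> ksum K1 K2"
proof -
  have z1: "0 \<in> K1" and z2: "0 \<in> K2" using family_zero K1 K2 by auto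
  show "K1 \<subseteq> ksum K1 K2" unfolding ksum_def using z2 by (force intro: image_eqI[where x="(f, 0)" for f])
  show "K2 \<subseteq> ksum K1 K2" unfolding ksum_def using z1 by (force intro: image_eqI[where x="(0, f)" for f])
  show "ksum K1 K2 \<in> mackey_family Y"
    unfolding mackey_family_def
  proof (intro CollectI conjI)
    show "ksum K1 K2 \<subseteq> Y" unfolding ksum_def
      using K1 K2 Y unfolding mackey_family_def by (auto intro!: subspace_add[OF Y])
    show "ksum K1 K2 \<noteq> {}" unfolding ksum_def using z1 z2 by auto
    show "absolutely_convex (ksum K1 K2)"
      unfolding absolutely_convex_def ksum_def
    proof (intro ballI allI impI)
      fix f g and a b :: real
      assume f: "f \<in> (\<lambda>p. fst p + snd p) ` (K1 \<times> K2)" and g: "g \<in> (\<lambda>p. fst p + snd p) ` (K1 \<times> K2)"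
        and ab: "\<bar>a\<bar> + \<bar>b\<bar> \<le> 1"
      obtain f1 f2 g1 g2 where fg: "f = f1 + f2" "g = g1 + g2" "f1 \<in> K1" "f2 \<in> K2" "g1 \<in> K1" "g2 \<in> K2"
        using f g by auto
      have "a *\<^sub>R f1 + b *\<^sub>R g1 \<in> K1" using family_ac[OF K1 fg(3) fg(5) ab] .
      moreover have "a *\<^sub>R f2 + b *\<^sub>R g2 \<in> K2" using family_ac[OF K2 fg(4) fg(6) ab] .
      moreover have "a *\<^sub>R f + b *\<^sub>R g = (a *\<^sub>R f1 + b *\<^sub>R g1) + (a *\<^sub>R f2 + b *\<^sub>R g2)"
        using fg by (simp add: algebra_simps)
      ultimately show "a *\<^sub>R f + b *\<^sub>R g \<in> (\<lambda>p. fst p + snd p) ` (K1 \<times> K2)"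
        by force
    qed
    have "compactin (prod_topology weak_star_topology weak_star_topology) (K1 \<times> K2)"
      using K1 K2 unfolding mackey_family_def by (simp add: compactin_Times)
    then show "compactin weak_star_topology (ksum K1 K2)"
      unfolding ksum_def by (rule image_compactin[OF _ cont_add_W])
  qed
qed

definition PP :: "(nat \<Rightarrow> real) set" where
  "PP = {a. \<forall>N. (\<Sum>n<N. \<bar>a n\<bar>) \<le> 1}"

lemma PP_le1: "a \<in> PP \<Longrightarrow> \<bar>a n\<bar> \<le> 1"
proof -
  assume "a \<in> PP"
  then have "(\<Sum>m<Suc n. \<bar>a m\<bar>) \<le> 1" unfolding PP_def by blast
  moreover have "\<bar>a n\<bar> \<le> (\<Sum>m<Suc n. \<bar>a m\<bar>)"
    by (rule member_le_sum) auto
  ultimately show ?thesis by linarith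
qed

lemma PP_compact: "compact PP"
proof -
  have "compactin (product_topology (\<lambda>_. euclidean) UNIV) (PiE UNIV (\<lambda>_::nat. {-1..1::real}))"
    by (simp add: compactin_PiE)
  then have c: "compact (PiE UNIV (\<lambda>_::nat. {-1..1::real}))"
    by (simp add: euclidean_product_topology)
  have cl: "closed PP"
  proof -
    have "PP = (\<Inter>N. {a. (\<Sum>n<N. \<bar>a n\<bar>) \<le> 1})" unfolding PP_def by auto
    moreover have "closed {a :: nat \<Rightarrow> real. (\<Sum>n<N. \<bar>a n\<bar>) \<le> 1}" for N
      by (intro closed_Collect_le continuous_intros continuous_on_subset[OF continuous_on_product_coordinates]) auto
    ultimately show ?thesis by (metis (no_types) closed_INT)
  qed
  have "PP \<subseteq> PiE UNIV (\<lambda>_::nat. {-1..1::real})"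
    using PP_le1 by (auto simp: abs_le_iff)
  then have "PP = PiE UNIV (\<lambda>_::nat. {-1..1::real}) \<inter> PP" by blast
  then show ?thesis using compact_Int_closed[OF c cl] by metis
qed

lemma PP_comb:
  assumes "a \<in> PP" "b \<in> PP" "\<bar>c\<bar> + \<bar>d\<bar> \<le> 1"
  shows "(\<lambda>n. c * a n + d * b n) \<in> PP"
  unfolding PP_def
proof (intro CollectI allI)
  fix N
  have "(\<Sum>n<N. \<bar>c * a n + d * b n\<bar>) \<le> (\<Sum>n<N. \<bar>c\<bar> * \<bar>a n\<bar> + \<bar>d\<bar> * \<bar>b n\<bar>)"
    by (intro sum_mono) (metis abs_mult abs_triangle_ineq)
  also have "\<dots> = \<bar>c\<bar> * (\<Sum>n<N. \<bar>a n\<bar>) + \<bar>d\<bar> * (\<Sum>n<N. \<bar>b n\<bar>)"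
    by (simp add: sum.distrib sum_distrib_left)
  also have "\<dots> \<le> \<bar>c\<bar> * 1 + \<bar>d\<bar> * 1"
    using assms(1,2) unfolding PP_def by (intro add_mono mult_left_mono) auto
  finally show "(\<Sum>n<N. \<bar>c * a n + d * b n\<bar>) \<le> 1" using assms(3) by simp
qed

lemma PP_delta: "(\<lambda>m. if m = n then 1 else 0) \<in> PP"
  unfolding PP_def
proof (intro CollectI allI)
  fix N
  have "(\<Sum>m<N. \<bar>if m = n then 1 else 0 :: real\<bar>) = (\<Sum>m<N. if m = n then 1 else 0)"
    by (intro sum.cong) auto
  also have "\<dots> \<le> 1" by (simp add: sum.delta)
  finally show "(\<Sum>m<N. \<bar>if m = n then 1 else 0 :: real\<bar>) \<le> 1" .
qed

definition gs :: "(nat \<Rightarrow> 'b::banach) \<Rightarrow> (nat \<Rightarrow> real) \<Rightarrow> 'b" where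
  "gs z a = (\<Sum>n. a n *\<^sub>R z n)"

lemma gs_summable:
  fixes z :: "nat \<Rightarrow> 'b::banach"
  assumes "summable (\<lambda>n. norm (z n))" "a \<in> PP"
  shows "summable (\<lambda>n. a n *\<^sub>R z n)"
proof (rule summable_comparison_test'[OF assms(1)])
  fix n show "norm (a n *\<^sub>R z n) \<le> norm (z n)"
    using PP_le1[OF assms(2), of n] by (simp add: mult_left_le_one_le)
qed

lemma gs_cont:
  assumes "summable (\<lambda>n. norm (z n :: 'b::banach))"
  shows "continuous_on PP (gs z)"
proof -
  have ul: "uniform_limit PP (\<lambda>N a. \<Sum>i<N. a i *\<^sub>R z i) (\<lambda>a. \<Sum>i. a i *\<^sub>R z i) sequentially"
  proof (rule Weierstrass_m_test[OF _ assms])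
    fix n a assume "a \<in> PP"
    then show "norm (a n *\<^sub>R z n) \<le> norm (z n)"
      using PP_le1[of a n] by (simp add: mult_left_le_one_le)
  qed
  have "continuous_on PP (\<lambda>a. \<Sum>i<N. a i *\<^sub>R z i)" for N
    by (intro continuous_intros continuous_on_subset[OF continuous_on_product_coordinates]) auto
  then show ?thesis unfolding gs_def
    by (intro uniform_limit_theorem[OF _ ul]) auto
qed

lemma gs_comb:
  assumes "summable (\<lambda>n. norm (z n :: 'b::banach))" "a \<in> PP" "b \<in> PP"
  shows "gs z (\<lambda>n. c * a n + d * b n) = c *\<^sub>R gs z a + d *\<^sub>R gs z b"
proof -
  have sa: "summable (\<lambda>n. a n *\<^sub>R z n)" and sb: "summable (\<lambda>n. b n *\<^sub>R z n)"
    using gs_summable assms by auto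
  have "(\<lambda>n. c *\<^sub>R (a n *\<^sub>R z n)) sums (c *\<^sub>R gs z a)"
    unfolding gs_def by (intro sums_scaleR_right summable_sums sa)
  moreover have "(\<lambda>n. d *\<^sub>R (b n *\<^sub>R z n)) sums (d *\<^sub>R gs z b)"
    unfolding gs_def by (intro sums_scaleR_right summable_sums sb)
  ultimately have "(\<lambda>n. c *\<^sub>R (a n *\<^sub>R z n) + d *\<^sub>R (b n *\<^sub>R z n)) sums (c *\<^sub>R gs z a + d *\<^sub>R gs z b)"
    by (rule sums_add)
  then have "(\<lambda>n. (c * a n + d * b n) *\<^sub>R z n) sums (c *\<^sub>R gs z a + d *\<^sub>R gs z b)"
    by (simp add: algebra_simps)
  then show ?thesis unfolding gs_def by (rule sums_unique[symmetric])
qed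

lemma gs_delta: "gs z (\<lambda>m. if m = n then 1 else 0) = z n"
proof -
  have "(\<lambda>m. (if m = n then 1 else 0) *\<^sub>R z m) = (\<lambda>m. if m = n then z m else 0)"
    by auto
  then show ?thesis unfolding gs_def using sums_single[of n z] sums_unique by metis
qed

lemma gs_family:
  fixes Y :: "('a::real_normed_vector \<Rightarrow>\<^sub>L real) set"
  assumes Y: "subspace Y" "closed Y" and z: "\<And>n. z n \<in> Y" and sz: "summable (\<lambda>n. norm (z n))"
  shows "gs z ` PP \<in> mackey_family Y" "z n \<in> gs z ` PP"
proof -
  show "z n \<in> gs z ` PP" using gs_delta[of z n] PP_delta[of n] by (metis image_eqI)
  show "gs z ` PP \<in> mackey_family Y"
    unfolding mackey_family_def
  proof (intro CollectI conjI)
    show "gs z ` PP \<subseteq> Y"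
    proof
      fix f assume "f \<in> gs z ` PP"
      then obtain a where a: "a \<in> PP" "f = gs z a" by auto
      have "(\<lambda>N. \<Sum>i<N. a i *\<^sub>R z i) \<longlonglongrightarrow> gs z a"
        unfolding gs_def by (intro summable_LIMSEQ gs_summable[OF sz a(1)])
      moreover have "(\<Sum>i<N. a i *\<^sub>R z i) \<in> Y" for N
        using Y(1) z by (intro subspace_sum subspace_scale) auto
      ultimately show "f \<in> Y" using a(2) closed_sequentially[OF Y(2)] by metis
    qed
    show "gs z ` PP \<noteq> {}" using PP_delta by blast
    show "absolutely_convex (gs z ` PP)"
      unfolding absolutely_convex_def
    proof (intro ballI allI impI)
      fix f g and c d :: real
      assume "f \<in> gs z ` PP" "g \<in> gs z ` PP" "\<bar>c\<bar> + \<bar>d\<bar> \<le> 1"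
      then obtain a b where ab: "a \<in> PP" "b \<in> PP" "f = gs z a" "g = gs z b" "\<bar>c\<bar> + \<bar>d\<bar> \<le> 1" by auto
      then have "c *\<^sub>R f + d *\<^sub>R g = gs z (\<lambda>n. c * a n + d * b n)"
        using gs_comb[OF sz ab(1,2)] by simp
      then show "c *\<^sub>R f + d *\<^sub>R g \<in> gs z ` PP"
        using PP_comb[OF ab(1,2,5)] by blast
    qed
    show "compactin weak_star_topology (gs z ` PP)"
      by (intro compact_imp_compactin_W compact_continuous_image gs_cont sz PP_compact)
  qed
qed

lemma family_norm_bound:
  fixes Y :: "('a::banach \<Rightarrow>\<^sub>L real) set"
  assumes K: "K \<in> mackey_family Y"
  shows "\<exists>M. \<forall>f\<in>K. norm f \<le> M"
proof -
  have pb: "pb K" using family_pb[OF K] .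
  define C where "C n = {x::'a. \<forall>f\<in>K. \<bar>blinfun_apply f x\<bar> \<le> real n}" for n
  have clC: "closed (C n)" for n
  proof -
    have "C n = (\<Inter>f\<in>K. {x. \<bar>blinfun_apply f x\<bar> \<le> real n})" unfolding C_def by auto
    moreover have "closed {x. \<bar>blinfun_apply f x\<bar> \<le> real n}" for f
      by (intro closed_Collect_le continuous_intros continuous_on_subset[OF linear_continuous_on[OF blinfun.bounded_linear_right]]) auto
    ultimately show ?thesis by (metis (no_types) closed_INT)
  qed
  have cov: "\<Union>(range C) = UNIV"
  proof (intro set_eqI iffI)
    fix x :: 'a
    obtain M where M: "\<forall>f\<in>K. \<bar>blinfun_apply f x\<bar> \<le> M"
      using pb unfolding pb_def bdd_above_def by auto
    obtain n where "M \<le> real n" using real_arch_simple by blast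
    then have "x \<in> C n" using M unfolding C_def by force
    then show "x \<in> \<Union>(range C)" by blast
  qed auto
  have "\<exists>n. interior (C n) \<noteq> {}"
  proof (rule ccontr)
    assume "\<not> ?thesis"
    then have "\<And>T. T \<in> range C \<Longrightarrow> closedin euclidean T \<and> euclidean interior_of T = {}"
      using clC by auto
    then have "euclidean interior_of \<Union>(range C) = {}"
      by (intro Baire_category_alt) (auto simp: completely_metrizable_space_euclidean)
    then show False using cov by simp
  qed
  then obtain n x0 where "x0 \<in> interior (C n)" by blast
  then obtain d where d: "d > 0" "ball x0 d \<subseteq> C n" using mem_interior by blast
  have "norm f \<le> 4 * real n / d" if f: "f \<in> K" for f
  proof (rule norm_blinfun_bound)
    show "0 \<le> 4 * real n / d" using d by simp
    fix h :: 'a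
    show "norm (blinfun_apply f h) \<le> 4 * real n / d * norm h"
    proof (cases "h = 0")
      case True then show ?thesis by simp
    next
      case False
      then have nh: "norm h > 0" by simp
      define h' where "h' = (d / (2 * norm h)) *\<^sub>R h"
      have nh': "norm h' = d / 2" unfolding h'_def using nh d by simp
      have "x0 + h' \<in> C n" "x0 \<in> C n" using d nh' by (auto intro!: subsetD[OF d(2)] simp: dist_norm)
      then have "\<bar>blinfun_apply f (x0 + h')\<bar> \<le> real n" "\<bar>blinfun_apply f x0\<bar> \<le> real n"
        using f unfolding C_def by auto
      then have "\<bar>blinfun_apply f h'\<bar> \<le> 2 * real n" by (simp add: blinfun.add_right)
      then have "(d / (2 * norm h)) * \<bar>blinfun_apply f h\<bar> \<le> 2 * real n"
        unfolding h'_def using d nh by (simp add: blinfun.scaleR_right abs_mult)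
      then have "d * \<bar>blinfun_apply f h\<bar> \<le> 4 * real n * norm h"
        using nh d by (simp add: field_simps)
      then show ?thesis using d by (simp add: field_simps)
    qed
  qed
  then show ?thesis by blast
qed

lemma inf_sublin:
  fixes V :: "'v::real_vector \<Rightarrow> real set"
  assumes ne: "\<And>v. V v \<noteq> {}" and nn: "\<And>v a. a \<in> V v \<Longrightarrow> 0 \<le> a" and z: "0 \<in> V 0"
    and sc: "\<And>c v. c > 0 \<Longrightarrow> V (c *\<^sub>R v) = (\<lambda>a. c * a) ` V v"
    and ad: "\<And>v w a b. a \<in> V v \<Longrightarrow> b \<in> V w \<Longrightarrow> \<exists>d\<in>V (v + w). d \<le> a + b"
  shows "sublin (\<lambda>v. Inf (V v))"
  unfolding sublin_def
proof (intro conjI allI impI)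
  have bdd: "bdd_below (V v)" for v using nn by (intro bdd_belowI[where m=0]) auto
  fix v w
  have "Inf (V (v + w)) \<le> a + b" if hab: "a \<in> V v" "b \<in> V w" for a b
  proof -
    obtain d where "d \<in> V (v + w)" "d \<le> a + b" using ad[OF hab] by blast
    then show ?thesis using cInf_lower[OF _ bdd] by (meson order_trans)
  qed
  then have "Inf (V (v + w)) - b \<le> Inf (V v)" if "b \<in> V w" for b
    using that ne by (intro cInf_greatest) (auto simp: algebra_simps)
  then have "Inf (V (v + w)) - Inf (V v) \<le> Inf (V w)"
    using ne by (intro cInf_greatest) (auto simp: algebra_simps)
  then show "Inf (V (v + w)) \<le> Inf (V v) + Inf (V w)" by simp
next
  have bdd: "bdd_below (V v)" for v using nn by (intro bdd_belowI[where m=0]) auto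
  fix c :: real and v assume c: "c \<ge> 0"
  show "Inf (V (c *\<^sub>R v)) = c * Inf (V v)"
  proof (cases "c = 0")
    case True
    have "Inf (V 0) = 0"
    proof (rule antisym)
      show "Inf (V 0) \<le> 0" using cInf_lower[OF z bdd] .
      show "0 \<le> Inf (V 0)" using ne nn by (intro cInf_greatest) auto
    qed
    then show ?thesis using True by simp
  next
    case False
    then have cp: "c > 0" using c by simp
    have "mono (\<lambda>s. c * s)" using c by (auto simp: mono_def mult_left_mono)
    moreover have "continuous (at_right (Inf (V v))) (\<lambda>s. c * s)"
      by (intro continuous_intros)
    ultimately show ?thesis
      using continuous_at_Inf_mono[of "\<lambda>s. c * s" "V v"] ne bdd sc[OF cp] by simp
  qed
qed

lemma bp_finite_sep:
  fixes K :: "('a::real_normed_vector \<Rightarrow>\<^sub>L real) set"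
  assumes cK: "compactin weak_star_topology K" and ne: "K \<noteq> {}" and nK: "\<psi> \<notin> K"
  shows "\<exists>S \<delta>. finite S \<and> \<delta> > 0 \<and> (\<forall>f\<in>K. \<exists>s\<in>S. \<delta> \<le> \<bar>blinfun_apply f s - blinfun_apply \<psi> s\<bar>)"
proof -
  define Op where "Op = (\<lambda>p. {f :: 'a \<Rightarrow>\<^sub>L real. blinfun_apply f (fst p) \<in> {r. 1 / real (Suc (snd p)) < \<bar>r - blinfun_apply \<psi> (fst p)\<bar>}})"
  have op: "\<forall>u\<in>range Op. openin weak_star_topology u"
  proof
    fix u assume "u \<in> range Op"
    then obtain p where "u = Op p" by auto
    moreover have "open {r. 1 / real (Suc (snd p)) < \<bar>r - blinfun_apply \<psi> (fst p)\<bar>}"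
      by (intro open_Collect_less continuous_intros)
    ultimately show "openin weak_star_topology u" unfolding Op_def using openin_W_basic by metis
  qed
  have cov: "K \<subseteq> \<Union>(range Op)"
  proof
    fix f assume f: "f \<in> K"
    then have "f \<noteq> \<psi>" using nK by auto
    then obtain s where "blinfun_apply f s \<noteq> blinfun_apply \<psi> s" using blinfun_eqI by blast
    then have "0 < \<bar>blinfun_apply f s - blinfun_apply \<psi> s\<bar>" by simp
    then obtain n where "inverse (real (Suc n)) < \<bar>blinfun_apply f s - blinfun_apply \<psi> s\<bar>"
      using reals_Archimedean by blast
    then have "f \<in> Op (s, n)" unfolding Op_def by (simp add: inverse_eq_divide)
    then show "f \<in> \<Union>(range Op)" by blast
  qed
  obtain F where F: "finite F" "F \<subseteq> range Op" "K \<subseteq> \<Union>F"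
    using cK op cov unfolding compactin_def by meson
  obtain I where I: "finite I" "F = Op ` I" using finite_subset_image[OF F(1,2)] by blast
  have Ine: "I \<noteq> {}" using F(3) ne I(2) by auto
  define N where "N = Max (snd ` I)"
  define \<delta> where "\<delta> = 1 / real (Suc N)"
  have "\<forall>f\<in>K. \<exists>s\<in>fst ` I. \<delta> \<le> \<bar>blinfun_apply f s - blinfun_apply \<psi> s\<bar>"
  proof
    fix f assume "f \<in> K"
    then obtain p where p: "p \<in> I" "f \<in> Op p" using F(3) I(2) by auto
    have "snd p \<le> N" unfolding N_def using p(1) I(1) by (auto intro: Max_ge)
    then have "\<delta> \<le> 1 / real (Suc (snd p))" unfolding \<delta>_def by (intro divide_left_mono) auto
    also have "\<dots> < \<bar>blinfun_apply f (fst p) - blinfun_apply \<psi> (fst p)\<bar>" using p(2) unfolding Op_def by auto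
    finally show "\<exists>s\<in>fst ` I. \<delta> \<le> \<bar>blinfun_apply f s - blinfun_apply \<psi> s\<bar>" using p(1) by force
  qed
  moreover have "\<delta> > 0" unfolding \<delta>_def by simp
  ultimately show ?thesis using I(1) by blast
qed

lemma bipolar:
  fixes Y :: "('a::real_normed_vector \<Rightarrow>\<^sub>L real) set"
  assumes K: "K \<in> mackey_family Y" and psi: "\<And>x. \<bar>blinfun_apply \<psi> x\<bar> \<le> sup_seminorm K x"
  shows "\<psi> \<in> K"
proof (rule ccontr)
  assume nK: "\<psi> \<notin> K"
  have pb: "pb K" using family_pb[OF K] .
  have cK: "compactin weak_star_topology K" and Kne: "K \<noteq> {}" using K unfolding mackey_family_def by auto
  obtain f0 where f0: "f0 \<in> K" using Kne by auto
  obtain S \<delta> where S: "finite S" "\<delta> > 0" "\<And>f. f \<in> K \<Longrightarrow> \<exists>s\<in>S. \<delta> \<le> \<bar>blinfun_apply f s - blinfun_apply \<psi> s\<bar>"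
    using bp_finite_sep[OF cK Kne nK] by blast
  have sepS: "\<delta> \<le> (\<Sum>s\<in>S. \<bar>blinfun_apply \<psi> s - blinfun_apply f s\<bar>)" if fK: "f \<in> K" for f
  proof -
    obtain s where s: "s \<in> S" "\<delta> \<le> \<bar>blinfun_apply f s - blinfun_apply \<psi> s\<bar>" using S(3)[OF fK] by blast
    have "\<bar>blinfun_apply \<psi> s - blinfun_apply f s\<bar> \<le> (\<Sum>s\<in>S. \<bar>blinfun_apply \<psi> s - blinfun_apply f s\<bar>)"
      by (rule member_le_sum) (use s S(1) in auto)
    then show ?thesis using s by (simp add: abs_minus_commute)
  qed
  define B where "B = (\<Sum>s\<in>S. sup_seminorm K s)"
  have Bf: "(\<Sum>s\<in>S. \<bar>blinfun_apply f s\<bar>) \<le> B" if "f \<in> K" for f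
    unfolding B_def by (intro sum_mono psn_ge[OF pb that])
  have B0: "B \<ge> 0" using Bf[OF f0] by (meson order_trans sum_nonneg abs_ge_zero)
  define C where "C = 2 / \<delta>"
  have C0: "C > 0" unfolding C_def using S(2) by simp
  define V where "V v = {t + C * (\<Sum>s\<in>S. \<bar>blinfun_apply v s - t * blinfun_apply f s\<bar>) | t f. t \<ge> 0 \<and> f \<in> K}" for v
  define q where "q v = Inf (V v)" for v
  have Vne: "V v \<noteq> {}" for v unfolding V_def using f0 by blast
  have Vnn: "0 \<le> a" if "a \<in> V v" for a v
    using that C0 unfolding V_def by (auto intro!: add_nonneg_nonneg mult_nonneg_nonneg sum_nonneg)
  have Vbdd: "bdd_below (V v)" for v using Vnn by (intro bdd_belowI[where m=0]) auto
  have Vmem: "t + C * (\<Sum>s\<in>S. \<bar>blinfun_apply v s - t * blinfun_apply f s\<bar>) \<in> V v" if "t \<ge> 0" "f \<in> K" for t f v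
    unfolding V_def using that by blast
  have qle: "q v \<le> t + C * (\<Sum>s\<in>S. \<bar>blinfun_apply v s - t * blinfun_apply f s\<bar>)" if "t \<ge> 0" "f \<in> K" for t f v
    unfolding q_def by (rule cInf_lower[OF Vmem[OF that] Vbdd])
  have sl: "sublin q"
    unfolding q_def[abs_def]
  proof (rule inf_sublin[OF Vne Vnn])
    show "0 \<in> V 0" using Vmem[OF _ f0, of 0 0] by simp
  next
    fix c :: real and v :: "'a \<Rightarrow>\<^sub>L real" assume c: "c > 0"
    have e: "t + C * (\<Sum>s\<in>S. \<bar>blinfun_apply (c *\<^sub>R v) s - t * blinfun_apply f s\<bar>)
        = c * (t / c + C * (\<Sum>s\<in>S. \<bar>blinfun_apply v s - (t / c) * blinfun_apply f s\<bar>))" for t f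
    proof -
      have "\<bar>blinfun_apply (c *\<^sub>R v) s - t * blinfun_apply f s\<bar> = c * \<bar>blinfun_apply v s - (t / c) * blinfun_apply f s\<bar>" for s
      proof -
        have "blinfun_apply (c *\<^sub>R v) s - t * blinfun_apply f s = c * (blinfun_apply v s - (t / c) * blinfun_apply f s)"
          using c by (simp add: blinfun.scaleR_left algebra_simps)
        then show ?thesis using c by (simp add: abs_mult)
      qed
      then show ?thesis using c by (simp add: sum_distrib_left algebra_simps)
    qed
    show "V (c *\<^sub>R v) = (\<lambda>a. c * a) ` V v"
    proof (rule set_eqI, rule iffI)
      fix a assume "a \<in> V (c *\<^sub>R v)"
      then obtain t f where tf: "t \<ge> 0" "f \<in> K" "a = t + C * (\<Sum>s\<in>S. \<bar>blinfun_apply (c *\<^sub>R v) s - t * blinfun_apply f s\<bar>)"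
        unfolding V_def by blast
      have "t / c + C * (\<Sum>s\<in>S. \<bar>blinfun_apply v s - (t / c) * blinfun_apply f s\<bar>) \<in> V v"
        using tf c by (intro Vmem) auto
      then show "a \<in> (\<lambda>a. c * a) ` V v" using tf(3) e[of t f] by blast
    next
      fix a assume "a \<in> (\<lambda>a. c * a) ` V v"
      then obtain t f where tf: "t \<ge> 0" "f \<in> K" "a = c * (t + C * (\<Sum>s\<in>S. \<bar>blinfun_apply v s - t * blinfun_apply f s\<bar>))"
        unfolding V_def by blast
      have "(c * t) + C * (\<Sum>s\<in>S. \<bar>blinfun_apply (c *\<^sub>R v) s - (c * t) * blinfun_apply f s\<bar>) \<in> V (c *\<^sub>R v)"
        using tf c by (intro Vmem) auto
      moreover have "(c * t) + C * (\<Sum>s\<in>S. \<bar>blinfun_apply (c *\<^sub>R v) s - (c * t) * blinfun_apply f s\<bar>) = a"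
        using e[of "c * t" f] c tf(3) by simp
      ultimately show "a \<in> V (c *\<^sub>R v)" by simp
    qed
  next
    fix v w a b assume a: "a \<in> V v" and b: "b \<in> V w"
    obtain t1 f1 where 1: "t1 \<ge> 0" "f1 \<in> K" "a = t1 + C * (\<Sum>s\<in>S. \<bar>blinfun_apply v s - t1 * blinfun_apply f1 s\<bar>)"
      using a unfolding V_def by blast
    obtain t2 f2 where 2: "t2 \<ge> 0" "f2 \<in> K" "b = t2 + C * (\<Sum>s\<in>S. \<bar>blinfun_apply w s - t2 * blinfun_apply f2 s\<bar>)"
      using b unfolding V_def by blast
    obtain f3 where f3: "f3 \<in> K" "(t1 + t2) *\<^sub>R f3 = t1 *\<^sub>R f1 + t2 *\<^sub>R f2"
    proof (cases "t1 + t2 = 0")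
      case True
      then have "t1 = 0" "t2 = 0" using 1(1) 2(1) by auto
      then show ?thesis using that[OF 1(2)] by simp
    next
      case False
      then have p: "t1 + t2 > 0" using 1(1) 2(1) by simp
      define f3 where "f3 = (t1 / (t1 + t2)) *\<^sub>R f1 + (t2 / (t1 + t2)) *\<^sub>R f2"
      have "\<bar>t1 / (t1 + t2)\<bar> + \<bar>t2 / (t1 + t2)\<bar> \<le> 1"
        using p 1(1) 2(1) by (simp add: add_divide_distrib[symmetric])
      then have "f3 \<in> K" unfolding f3_def by (rule family_ac[OF K 1(2) 2(2)])
      moreover have "(t1 + t2) *\<^sub>R f3 = t1 *\<^sub>R f1 + t2 *\<^sub>R f2"
        unfolding f3_def using p by (simp add: scaleR_add_right)
      ultimately show ?thesis by (rule that)
    qed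
    have ev: "(t1 + t2) * blinfun_apply f3 s = t1 * blinfun_apply f1 s + t2 * blinfun_apply f2 s" for s
    proof -
      have "blinfun_apply ((t1 + t2) *\<^sub>R f3) s = blinfun_apply (t1 *\<^sub>R f1 + t2 *\<^sub>R f2) s" using f3(2) by simp
      then show ?thesis by (simp add: blinfun.scaleR_left blinfun.add_left)
    qed
    have tri: "\<bar>(p1 + p2) - (r1 + r2)\<bar> \<le> \<bar>p1 - r1\<bar> + \<bar>p2 - r2\<bar>" for p1 p2 r1 r2 :: real by arith
    have "\<bar>blinfun_apply (v + w) s - (t1 + t2) * blinfun_apply f3 s\<bar>
        \<le> \<bar>blinfun_apply v s - t1 * blinfun_apply f1 s\<bar> + \<bar>blinfun_apply w s - t2 * blinfun_apply f2 s\<bar>" for s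
      unfolding ev blinfun.add_left by (rule tri)
    then have "(\<Sum>s\<in>S. \<bar>blinfun_apply (v + w) s - (t1 + t2) * blinfun_apply f3 s\<bar>)
        \<le> (\<Sum>s\<in>S. \<bar>blinfun_apply v s - t1 * blinfun_apply f1 s\<bar>) + (\<Sum>s\<in>S. \<bar>blinfun_apply w s - t2 * blinfun_apply f2 s\<bar>)"
      unfolding sum.distrib[symmetric] by (rule sum_mono)
    then have "C * (\<Sum>s\<in>S. \<bar>blinfun_apply (v + w) s - (t1 + t2) * blinfun_apply f3 s\<bar>)
        \<le> C * ((\<Sum>s\<in>S. \<bar>blinfun_apply v s - t1 * blinfun_apply f1 s\<bar>) + (\<Sum>s\<in>S. \<bar>blinfun_apply w s - t2 * blinfun_apply f2 s\<bar>))"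
      using C0 by (intro mult_left_mono) auto
    then have "(t1 + t2) + C * (\<Sum>s\<in>S. \<bar>blinfun_apply (v + w) s - (t1 + t2) * blinfun_apply f3 s\<bar>) \<le> a + b"
      using 1(3) 2(3) by (simp add: distrib_left)
    moreover have "(t1 + t2) + C * (\<Sum>s\<in>S. \<bar>blinfun_apply (v + w) s - (t1 + t2) * blinfun_apply f3 s\<bar>) \<in> V (v + w)"
      using 1(1) 2(1) f3(1) by (intro Vmem) auto
    ultimately show "\<exists>d\<in>V (v + w). d \<le> a + b" by blast
  qed
  obtain l where l: "linear l" "\<And>v. l v \<le> q v" "l \<psi> = q \<psi>"
    using hahn_banach_point[OF sl] by blast
  have ker: "l v = 0" if v: "\<forall>s\<in>S. blinfun_apply v s = 0" for v
  proof -
    have "q v \<le> 0" using qle[OF _ f0, of 0 v] v by simp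
    moreover have "q (- v) \<le> 0" using qle[OF _ f0, of 0 "- v"] v by (simp add: blinfun.minus_left)
    ultimately have "l v \<le> 0" "l (- v) \<le> 0" using l(2)[of v] l(2)[of "- v"] by linarith+
    then show ?thesis using linear_neg[OF l(1), of v] by simp
  qed
  obtain c where c: "\<And>v. l v = (\<Sum>s\<in>S. c s * blinfun_apply v s)"
    using lin_comb_of_kernel[OF S(1), of "\<lambda>s v. blinfun_apply v s" l] l(1) ker
      bounded_linear.linear[OF blinfun.bounded_linear_left] by blast
  define x where "x = (\<Sum>s\<in>S. c s *\<^sub>R s)"
  have lx: "l v = blinfun_apply v x" for v
    unfolding c x_def by (simp add: blinfun.sum_right blinfun.scaleR_right)
  have "blinfun_apply f x \<le> 1" if "f \<in> K" for f
    using lx[of f] l(2)[of f] qle[OF _ that, of 1 f] by simp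
  then have "\<bar>blinfun_apply f x\<bar> \<le> 1" if fK: "f \<in> K" for f
  proof -
    have "blinfun_apply f x \<le> 1" "blinfun_apply (- f) x \<le> 1"
      using \<open>\<And>f. f \<in> K \<Longrightarrow> blinfun_apply f x \<le> 1\<close> fK family_neg[OF K fK] by auto
    then show ?thesis by (simp add: blinfun.minus_left)
  qed
  then have pK: "sup_seminorm K x \<le> 1" by (rule psn_le[OF pb])
  define \<eta> where "\<eta> = min 1 (\<delta> / (2 * (B + 1)))"
  have \<eta>0: "\<eta> > 0" unfolding \<eta>_def using S(2) B0 by simp
  have \<eta>B: "\<eta> * B \<le> \<delta> / 2"
  proof -
    have "\<eta> * B \<le> (\<delta> / (2 * (B + 1))) * B" unfolding \<eta>_def using B0 by (intro mult_right_mono) auto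
    also have "\<dots> \<le> \<delta> / 2" using B0 S(2) by (simp add: field_simps)
    finally show ?thesis .
  qed
  have "1 + \<eta> \<le> q \<psi>"
    unfolding q_def
  proof (rule cInf_greatest[OF Vne])
    fix a assume "a \<in> V \<psi>"
    then obtain t f where tf: "t \<ge> 0" "f \<in> K" "a = t + C * (\<Sum>s\<in>S. \<bar>blinfun_apply \<psi> s - t * blinfun_apply f s\<bar>)"
      unfolding V_def by blast
    have Ssum: "0 \<le> (\<Sum>s\<in>S. \<bar>blinfun_apply \<psi> s - t * blinfun_apply f s\<bar>)" by (simp add: sum_nonneg)
    show "1 + \<eta> \<le> a"
    proof (cases "t \<le> 1")
      case True
      have "\<bar>t\<bar> + \<bar>0\<bar> \<le> (1::real)" using True tf(1) by simp
      then have "t *\<^sub>R f + 0 *\<^sub>R f \<in> K" by (rule family_ac[OF K tf(2) tf(2)])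
      then have "\<delta> \<le> (\<Sum>s\<in>S. \<bar>blinfun_apply \<psi> s - t * blinfun_apply f s\<bar>)"
        using sepS[of "t *\<^sub>R f"] by (simp add: blinfun.scaleR_left)
      then have "C * \<delta> \<le> C * (\<Sum>s\<in>S. \<bar>blinfun_apply \<psi> s - t * blinfun_apply f s\<bar>)"
        using C0 by simp
      moreover have "C * \<delta> = 2" unfolding C_def using S(2) by simp
      ultimately show ?thesis using tf \<eta>_def by linarith
    next
      case False
      show ?thesis
      proof (cases "t \<ge> 1 + \<eta>")
        case True
        have "0 \<le> C * (\<Sum>s\<in>S. \<bar>blinfun_apply \<psi> s - t * blinfun_apply f s\<bar>)" using C0 Ssum by simp
        then show ?thesis using tf(3) True by linarith
      next
        case False2: False
        have "(\<Sum>s\<in>S. \<bar>blinfun_apply \<psi> s - blinfun_apply f s\<bar>) - (t - 1) * (\<Sum>s\<in>S. \<bar>blinfun_apply f s\<bar>)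
            \<le> (\<Sum>s\<in>S. \<bar>blinfun_apply \<psi> s - t * blinfun_apply f s\<bar>)"
        proof -
          have "\<bar>blinfun_apply \<psi> s - blinfun_apply f s\<bar> - (t - 1) * \<bar>blinfun_apply f s\<bar>
              \<le> \<bar>blinfun_apply \<psi> s - t * blinfun_apply f s\<bar>" for s
          proof -
            have "\<bar>(t - 1) * blinfun_apply f s\<bar> = (t - 1) * \<bar>blinfun_apply f s\<bar>" using False by (simp add: abs_mult)
            moreover have "\<bar>blinfun_apply \<psi> s - blinfun_apply f s\<bar> \<le> \<bar>blinfun_apply \<psi> s - t * blinfun_apply f s\<bar> + \<bar>(t - 1) * blinfun_apply f s\<bar>"
            proof -
              have "blinfun_apply \<psi> s - blinfun_apply f s = (blinfun_apply \<psi> s - t * blinfun_apply f s) + (t - 1) * blinfun_apply f s"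
                by (simp add: algebra_simps)
              then show ?thesis by (metis abs_triangle_ineq)
            qed
            ultimately show ?thesis by linarith
          qed
          then have "(\<Sum>s\<in>S. \<bar>blinfun_apply \<psi> s - blinfun_apply f s\<bar> - (t - 1) * \<bar>blinfun_apply f s\<bar>)
              \<le> (\<Sum>s\<in>S. \<bar>blinfun_apply \<psi> s - t * blinfun_apply f s\<bar>)" by (rule sum_mono)
          then show ?thesis by (simp add: sum_subtractf sum_distrib_left)
        qed
        moreover have "(t - 1) * (\<Sum>s\<in>S. \<bar>blinfun_apply f s\<bar>) \<le> \<eta> * B"
          using False False2 Bf[OF tf(2)] \<eta>0 by (intro mult_mono) (auto simp: sum_nonneg)
        ultimately have "\<delta> / 2 \<le> (\<Sum>s\<in>S. \<bar>blinfun_apply \<psi> s - t * blinfun_apply f s\<bar>)"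
          using sepS[OF tf(2)] \<eta>B by linarith
        then have "C * (\<delta> / 2) \<le> C * (\<Sum>s\<in>S. \<bar>blinfun_apply \<psi> s - t * blinfun_apply f s\<bar>)"
          using C0 by simp
        moreover have "C * (\<delta> / 2) = 1" unfolding C_def using S(2) by simp
        ultimately show ?thesis using tf \<eta>_def False by linarith
      qed
    qed
  qed
  then have "1 + \<eta> \<le> blinfun_apply \<psi> x" using l(3) lx[of \<psi>] by simp
  moreover have "\<bar>blinfun_apply \<psi> x\<bar> \<le> 1" using psi[of x] pK by simp
  ultimately show False using \<eta>0 by simp
qed

lemma psn_zero: "pb K \<Longrightarrow> sup_seminorm K 0 = 0"
proof -
  assume K: "pb K"
  have "sup_seminorm K 0 \<le> 0" by (rule psn_le[OF K]) simp
  then show ?thesis using psn_nonneg[OF K, of 0] by linarith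
qed

lemma psn_scale_eq: "pb K \<Longrightarrow> sup_seminorm K (c *\<^sub>R x) = \<bar>c\<bar> * sup_seminorm K x"
proof -
  assume K: "pb K"
  show ?thesis
  proof (cases "c = 0")
    case True then show ?thesis using psn_zero[OF K] by simp
  next
    case False
    have "sup_seminorm K x = sup_seminorm K ((1 / c) *\<^sub>R (c *\<^sub>R x))" using False by simp
    also have "\<dots> \<le> \<bar>1 / c\<bar> * sup_seminorm K (c *\<^sub>R x)" by (rule psn_scale[OF K])
    finally have "\<bar>c\<bar> * sup_seminorm K x \<le> sup_seminorm K (c *\<^sub>R x)"
      using False by (simp add: field_simps)
    then show ?thesis using psn_scale[OF K, of c x] by simp
  qed
qed

definition mball where "mball K x0 e = {x. sup_seminorm K (x - x0) < e}"

lemma mball_open: "K \<in> mackey_family Y \<Longrightarrow> openin (mackey_topology Y) (mball K x0 e)"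
  unfolding mackey_topology_def mball_def by (rule topology_generated_by_Basis) blast

lemma mackey_topspace:
  fixes Y :: "('a::real_normed_vector \<Rightarrow>\<^sub>L real) set"
  assumes Y: "subspace Y"
  shows "topspace (mackey_topology Y) = UNIV"
proof -
  have s0: "seg (0 :: 'a \<Rightarrow>\<^sub>L real) \<in> mackey_family Y" using seg_family[OF Y subspace_0[OF Y]] .
  have h: "mball (seg 0) x 1 \<in> {{x. sup_seminorm K (x - x0) < e} | K x0 e. K \<in> mackey_family Y}" for x :: 'a
    unfolding mball_def using s0 by blast
  have h2: "x \<in> mball (seg 0) x 1" for x :: 'a
    unfolding mball_def using psn_zero[OF family_pb[OF s0]] by simp
  have "x \<in> \<Union>{{x. sup_seminorm K (x - x0) < e} | K x0 e. K \<in> mackey_family Y}" for x :: 'a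
    using h[of x] h2[of x] by (rule UnionI)
  then show ?thesis unfolding mackey_topology_def topology_generated_by_topspace by blast
qed

lemma mackey_open_ball:
  assumes Y: "subspace Y" and U: "openin (mackey_topology Y) U" and x: "x \<in> U"
  shows "\<exists>K\<in>mackey_family Y. \<exists>e>0. mball K x e \<subseteq> U"
proof -
  have "generate_topology_on {{x. sup_seminorm K (x - x0) < e} | K x0 e. K \<in> mackey_family Y} U"
    using U unfolding mackey_topology_def by (rule openin_topology_generated_by)
  then show ?thesis using x
  proof (induction arbitrary: x)
    case Empty then show ?case by simp
  next
    case (Int a b)
    obtain K1 e1 where 1: "K1 \<in> mackey_family Y" "e1 > 0" "mball K1 x e1 \<subseteq> a" using Int by blast
    obtain K2 e2 where 2: "K2 \<in> mackey_family Y" "e2 > 0" "mball K2 x e2 \<subseteq> b" using Int by blast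
    have K3: "ksum K1 K2 \<in> mackey_family Y" "K1 \<subseteq> ksum K1 K2" "K2 \<subseteq> ksum K1 K2"
      using ksum_family[OF Y 1(1) 2(1)] by auto
    have ne: "K1 \<noteq> {}" "K2 \<noteq> {}" using 1(1) 2(1) unfolding mackey_family_def by auto
    have "mball (ksum K1 K2) x (min e1 e2) \<subseteq> a \<inter> b"
    proof
      fix z assume "z \<in> mball (ksum K1 K2) x (min e1 e2)"
      then have z: "sup_seminorm (ksum K1 K2) (z - x) < min e1 e2" unfolding mball_def by simp
      have "sup_seminorm K1 (z - x) \<le> sup_seminorm (ksum K1 K2) (z - x)"
        by (rule psn_mono[OF family_pb[OF K3(1)] K3(2) ne(1)])
      moreover have "sup_seminorm K2 (z - x) \<le> sup_seminorm (ksum K1 K2) (z - x)"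
        by (rule psn_mono[OF family_pb[OF K3(1)] K3(3) ne(2)])
      ultimately have "z \<in> mball K1 x e1" "z \<in> mball K2 x e2" using z unfolding mball_def by auto
      then show "z \<in> a \<inter> b" using 1(3) 2(3) by auto
    qed
    then show ?case using K3(1) 1(2) 2(2) by (intro bexI[of _ "ksum K1 K2"] exI[of _ "min e1 e2"]) auto
  next
    case (UN K x)
    then obtain k where "k \<in> K" "x \<in> k" by auto
    then show ?case using UN.IH[of k x] by blast
  next
    case (Basis s)
    then obtain K x0 e where s: "s = {x. sup_seminorm K (x - x0) < e}" "K \<in> mackey_family Y" by blast
    have pb: "pb K" using family_pb[OF s(2)] .
    define e' where "e' = e - sup_seminorm K (x - x0)"
    have e': "e' > 0" using Basis.prems s(1) unfolding e'_def by simp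
    have "mball K x e' \<subseteq> s"
    proof
      fix z assume "z \<in> mball K x e'"
      then have "sup_seminorm K (z - x) < e'" unfolding mball_def by simp
      then have "sup_seminorm K (z - x0) < e" using psn_tri3[OF pb, of z x0 x] unfolding e'_def by simp
      then show "z \<in> s" using s(1) by simp
    qed
    then show ?case using s(2) e' by blast
  qed
qed

lemma converges_closed:
  assumes Y: "subspace Y" and conv: "mackey_converges Y F x0" and B: "closedin (mackey_topology Y) B"
    and ev: "eventually (\<lambda>x. x \<in> B) F" and F: "F \<noteq> bot"
  shows "x0 \<in> B"
proof (rule ccontr)
  assume nB: "x0 \<notin> B"
  have "openin (mackey_topology Y) (UNIV - B)"
    using B mackey_topspace[OF Y] unfolding closedin_def by simp
  then obtain K e where K: "K \<in> mackey_family Y" "e > 0" "mball K x0 e \<subseteq> UNIV - B"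
    using mackey_open_ball[OF Y] nB by blast
  have "eventually (\<lambda>x. sup_seminorm K (x - x0) < e) F" using conv K unfolding mackey_converges_def by blast
  then have nev: "eventually (\<lambda>x. x \<notin> B) F"
    by (rule eventually_mono) (use K(3) in \<open>auto simp: mball_def\<close>)
  from ev nev have "eventually (\<lambda>x. False) F" by eventually_elim simp
  then show False using F by simp
qed

lemma complete_imp_quasi:
  assumes Y: "subspace Y" and c: "mackey_complete Y"
  shows "mackey_quasi_complete Y"
  unfolding mackey_quasi_complete_def mackey_complete_set_def
proof (intro allI impI)
  fix B F assume B: "mackey_bounded Y B \<and> closedin (mackey_topology Y) B"
    and F: "mackey_cauchy Y F \<and> eventually (\<lambda>x. x \<in> B) F"
  have cs: "mackey_complete_set Y UNIV" using c unfolding mackey_complete_def .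
  have "mackey_cauchy Y F \<and> eventually (\<lambda>x. x \<in> UNIV) F" using F by simp
  then obtain x0 where "mackey_converges Y F x0"
    using cs unfolding mackey_complete_set_def by blast
  moreover have "F \<noteq> bot" using F unfolding mackey_cauchy_def by auto
  ultimately show "\<exists>x0\<in>B. mackey_converges Y F x0" using converges_closed[OF Y] B F by blast
qed

definition phi :: "'a filter \<Rightarrow> ('a::real_normed_vector \<Rightarrow>\<^sub>L real) \<Rightarrow> real" where
  "phi F y = Lim F (\<lambda>x. blinfun_apply y x)"

lemma cauchy_small:
  assumes "mackey_cauchy Y F" "K \<in> mackey_family Y" "e > 0"
  shows "\<exists>A. eventually (\<lambda>x. x \<in> A) F \<and> (\<forall>x\<in>A. \<forall>y\<in>A. sup_seminorm K (x - y) < e)"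
  using assms unfolding mackey_cauchy_def by blast

lemma phi_tendsto:
  fixes Y :: "('a::real_normed_vector \<Rightarrow>\<^sub>L real) set"
  assumes F: "mackey_cauchy Y F" and Y: "subspace Y" and y: "y \<in> Y"
  shows "((\<lambda>x. blinfun_apply y x) \<longlongrightarrow> phi F y) F"
proof -
  have Fne: "F \<noteq> bot" using F unfolding mackey_cauchy_def by auto
  have K: "seg y \<in> mackey_family Y" using seg_family[OF Y y] .
  have cf: "cauchy_filter (filtermap (\<lambda>x. blinfun_apply y x) F)"
    unfolding cauchy_filter_metric_filtermap
  proof (intro allI impI)
    fix e :: real assume e: "e > 0"
    obtain A where A: "eventually (\<lambda>x. x \<in> A) F" "\<forall>x\<in>A. \<forall>x'\<in>A. sup_seminorm (seg y) (x - x') < e"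
      using cauchy_small[OF F K e] by blast
    have "dist (blinfun_apply y x) (blinfun_apply y x') < e" if xx: "x \<in> A" "x' \<in> A" for x x'
    proof -
      have "sup_seminorm (seg y) (x - x') < e" using A(2) xx by blast
      then show ?thesis using seg_psn[OF Y y, of "x - x'"] by (simp add: dist_real_def blinfun.diff_right)
    qed
    then show "\<exists>P. eventually P F \<and> (\<forall>x x'. P x \<and> P x' \<longrightarrow> dist (blinfun_apply y x) (blinfun_apply y x') < e)"
      using A(1) by blast
  qed
  have nb: "filtermap (\<lambda>x. blinfun_apply y x) F \<noteq> bot" using Fne by (simp add: filtermap_bot_iff)
  have "\<exists>c. filtermap (\<lambda>x. blinfun_apply y x) F \<le> nhds c"
    by (rule cauchy_filter_complete_converges[OF cf complete_UNIV _ nb]) simp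
  then obtain c where "filtermap (\<lambda>x. blinfun_apply y x) F \<le> nhds c" by blast
  then have "((\<lambda>x. blinfun_apply y x) \<longlongrightarrow> c) F" unfolding filterlim_def .
  moreover then have "phi F y = c" unfolding phi_def using Fne by (intro tendsto_Lim) auto
  ultimately show ?thesis by simp
qed

lemma phi_close:
  fixes Y :: "('a::real_normed_vector \<Rightarrow>\<^sub>L real) set"
  assumes F: "mackey_cauchy Y F" and Y: "subspace Y" and K: "K \<in> mackey_family Y" and y: "y \<in> K"
    and A: "eventually (\<lambda>x. x \<in> A) F" "\<forall>x\<in>A. \<forall>x'\<in>A. sup_seminorm K (x - x') < e" and a: "a \<in> A"
  shows "\<bar>phi F y - blinfun_apply y a\<bar> \<le> e"
proof -
  have Fne: "F \<noteq> bot" using F unfolding mackey_cauchy_def by auto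
  have yY: "y \<in> Y" using K y unfolding mackey_family_def by auto
  have "((\<lambda>x. \<bar>blinfun_apply y x - blinfun_apply y a\<bar>) \<longlongrightarrow> \<bar>phi F y - blinfun_apply y a\<bar>) F"
    by (intro tendsto_intros phi_tendsto[OF F Y yY])
  moreover have "eventually (\<lambda>x. \<bar>blinfun_apply y x - blinfun_apply y a\<bar> \<le> e) F"
  proof (rule eventually_mono[OF A(1)])
    fix x assume x: "x \<in> A"
    have "\<bar>blinfun_apply y (x - a)\<bar> \<le> sup_seminorm K (x - a)" by (rule psn_ge[OF family_pb[OF K] y])
    also have "\<dots> < e" using A(2) x a by blast
    finally show "\<bar>blinfun_apply y x - blinfun_apply y a\<bar> \<le> e" by (simp add: blinfun.diff_right)
  qed
  ultimately show ?thesis using Fne by (intro tendsto_upperbound) auto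
qed

lemma phi_scale:
  fixes Y :: "('a::real_normed_vector \<Rightarrow>\<^sub>L real) set"
  assumes F: "mackey_cauchy Y F" and Y: "subspace Y" and y: "y \<in> Y"
  shows "phi F (c *\<^sub>R y) = c * phi F y"
proof -
  have Fne: "F \<noteq> bot" using F unfolding mackey_cauchy_def by auto
  have "((\<lambda>x. blinfun_apply (c *\<^sub>R y) x) \<longlongrightarrow> phi F (c *\<^sub>R y)) F"
    by (rule phi_tendsto[OF F Y subspace_scale[OF Y y]])
  moreover have "((\<lambda>x. blinfun_apply (c *\<^sub>R y) x) \<longlongrightarrow> c * phi F y) F"
    unfolding blinfun.scaleR_left real_scaleR_def by (intro tendsto_intros phi_tendsto[OF F Y y])
  ultimately show ?thesis using Fne tendsto_unique by (metis trivial_limit_def)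
qed

lemma phi_bounded:
  fixes Y :: "('a::real_normed_vector \<Rightarrow>\<^sub>L real) set"
  assumes F: "mackey_cauchy Y F" and Y: "subspace Y" "closed Y"
  shows "\<exists>r0\<ge>0. \<forall>y\<in>Y. \<bar>phi F y\<bar> \<le> r0 * norm y"
proof (rule ccontr)
  assume "\<not> ?thesis"
  then have "\<forall>n::nat. \<exists>y\<in>Y. (4::real) ^ n * norm y < \<bar>phi F y\<bar>"
    by (metis not_le zero_le_numeral zero_le_power)
  then obtain y where y: "\<And>n. y n \<in> Y" "\<And>n. (4::real) ^ n * norm (y n) < \<bar>phi F (y n)\<bar>"
    by metis
  have Fne: "F \<noteq> bot" using F unfolding mackey_cauchy_def by auto
  have ny: "norm (y n) > 0" for n
  proof (rule ccontr)
    assume "\<not> norm (y n) > 0"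
    then have "y n = 0" by simp
    then have "phi F (y n) = 0" using phi_scale[OF F Y(1) y(1)[of n], of 0] by simp
    then show False using y(2)[of n] \<open>y n = 0\<close> by simp
  qed
  define z where "z n = (1 / (2 ^ n * norm (y n))) *\<^sub>R y n" for n
  have zY: "z n \<in> Y" for n unfolding z_def by (rule subspace_scale[OF Y(1) y(1)])
  have nz: "norm (z n) = (1 / 2) ^ n" for n
    unfolding z_def using ny[of n] by (simp add: power_one_over)
  have sz: "summable (\<lambda>n. norm (z n))" unfolding nz by (rule summable_geometric) simp
  have pz: "2 ^ n < \<bar>phi F (z n)\<bar>" for n
  proof -
    have "phi F (z n) = (1 / (2 ^ n * norm (y n))) * phi F (y n)"
      unfolding z_def by (rule phi_scale[OF F Y(1) y(1)])
    then have "\<bar>phi F (z n)\<bar> = \<bar>phi F (y n)\<bar> / (2 ^ n * norm (y n))"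
      using ny[of n] by (simp add: abs_mult)
    moreover have "(2::real) ^ n * (2 ^ n * norm (y n)) < \<bar>phi F (y n)\<bar>"
      using y(2)[of n] by (simp add: power_mult_distrib[symmetric] mult.assoc[symmetric])
    ultimately have "norm (y n) * ((2::real) ^ n * 2 ^ n) < norm (y n) * (\<bar>phi F (z n)\<bar> * 2 ^ n)"
      using ny[of n] by (simp add: field_simps)
    then have "(2::real) ^ n * 2 ^ n < \<bar>phi F (z n)\<bar> * 2 ^ n"
      using ny[of n] mult_less_cancel_left_pos by blast
    then show ?thesis by simp
  qed
  define K where "K = gs z ` PP"
  have K: "K \<in> mackey_family Y" "\<And>n. z n \<in> K" unfolding K_def using gs_family[OF Y zY sz] by auto
  obtain A where A: "eventually (\<lambda>x. x \<in> A) F" "\<forall>x\<in>A. \<forall>x'\<in>A. sup_seminorm K (x - x') < 1"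
    using cauchy_small[OF F K(1), of 1] by auto
  obtain a where a: "a \<in> A" using eventually_happens[OF A(1)] Fne by auto
  have "\<bar>phi F (z n)\<bar> \<le> 1 + norm a" for n
  proof -
    have "\<bar>phi F (z n) - blinfun_apply (z n) a\<bar> \<le> 1"
      by (rule phi_close[OF F Y(1) K(1) K(2) A a])
    moreover have "\<bar>blinfun_apply (z n) a\<bar> \<le> norm a"
    proof -
      have "\<bar>blinfun_apply (z n) a\<bar> \<le> norm (z n) * norm a" using norm_blinfun[of "z n" a] by simp
      also have "\<dots> \<le> 1 * norm a" unfolding nz by (intro mult_right_mono) (auto simp: power_le_one)
      finally show ?thesis by simp
    qed
    ultimately show ?thesis by linarith
  qed
  moreover obtain n :: nat where "1 + norm a < real n" using reals_Archimedean2 by blast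
  moreover have "real n < 2 ^ n"
  proof -
    have "n < 2 ^ n" by simp
    then have "real n < real (2 ^ n)" by linarith
    then show ?thesis by simp
  qed
  ultimately show False using pz[of n] by (meson less_le_trans not_less order_less_trans)
qed

lemma density:
  fixes Y :: "('a::real_normed_vector \<Rightarrow>\<^sub>L real) set"
  assumes F: "mackey_cauchy Y F" and Y: "subspace Y" and r0: "r0 \<ge> 0"
    and bnd: "\<forall>y\<in>Y. \<bar>phi F y\<bar> \<le> r0 * norm y"
    and K: "K \<in> mackey_family Y" and e: "e > 0" and A: "eventually (\<lambda>x. x \<in> A) F"
  shows "\<exists>b. (\<forall>y\<in>Y. \<bar>blinfun_apply y b\<bar> \<le> (4 * r0 + 1) * norm y) \<and> (\<exists>a\<in>A. sup_seminorm K (b - a) < e)"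
proof -
  define r where "r = 4 * r0 + 1"
  have r: "r > 0" unfolding r_def using r0 by simp
  have pb: "pb K" using family_pb[OF K] .
  have Fne: "F \<noteq> bot" using F unfolding mackey_cauchy_def by auto
  have e4: "e / 4 > 0" using e by simp
  obtain A' where A': "eventually (\<lambda>x. x \<in> A') F" "\<forall>x\<in>A'. \<forall>x'\<in>A'. sup_seminorm K (x - x') < e / 4"
    using cauchy_small[OF F K e4] by blast
  have "eventually (\<lambda>x. x \<in> A \<inter> A') F" using eventually_conj[OF A A'(1)] by simp
  then obtain a where a: "a \<in> A" "a \<in> A'" using eventually_happens Fne by blast
  show ?thesis
  proof (rule ccontr)
    assume nb: "\<not> ?thesis"
    have nb': "e \<le> sup_seminorm K (w - a)" if "\<forall>y\<in>Y. \<bar>blinfun_apply y w\<bar> \<le> r * norm y" for w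
      using nb that a(1) unfolding r_def by (meson not_less)
    define V where "V x = {sup_seminorm K (x - w) / e + t / r | w t. t \<ge> 0 \<and> (\<forall>y\<in>Y. \<bar>blinfun_apply y w\<bar> \<le> t * norm y)}" for x
    define q where "q x = Inf (V x)" for x
    have Vmem: "sup_seminorm K (x - w) / e + t / r \<in> V x"
      if "t \<ge> 0" "\<forall>y\<in>Y. \<bar>blinfun_apply y w\<bar> \<le> t * norm y" for x w t
      unfolding V_def using that by blast
    have Vnn: "0 \<le> v" if "v \<in> V x" for v x
      using that psn_nonneg[OF pb] e r unfolding V_def by (auto intro!: add_nonneg_nonneg divide_nonneg_pos)
    have Vne: "V x \<noteq> {}" for x using Vmem[of 0 0 x] by auto
    have Vbdd: "bdd_below (V x)" for x using Vnn by (intro bdd_belowI[where m=0]) auto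
    have qle: "q x \<le> sup_seminorm K (x - w) / e + t / r"
      if "t \<ge> 0" "\<forall>y\<in>Y. \<bar>blinfun_apply y w\<bar> \<le> t * norm y" for x w t
      unfolding q_def by (rule cInf_lower[OF Vmem[OF that] Vbdd])
    have sl: "sublin q"
      unfolding q_def[abs_def]
    proof (rule inf_sublin[OF Vne Vnn])
      show "0 \<in> V 0" using Vmem[of 0 0 0] psn_zero[OF pb] by simp
    next
      fix c :: real and x :: 'a assume c: "c > 0"
      show "V (c *\<^sub>R x) = (\<lambda>v. c * v) ` V x"
      proof (rule set_eqI, rule iffI)
        fix v assume "v \<in> V (c *\<^sub>R x)"
        then obtain w t where wt: "t \<ge> 0" "\<forall>y\<in>Y. \<bar>blinfun_apply y w\<bar> \<le> t * norm y"
          "v = sup_seminorm K (c *\<^sub>R x - w) / e + t / r" unfolding V_def by blast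
        have w': "\<forall>y\<in>Y. \<bar>blinfun_apply y ((1 / c) *\<^sub>R w)\<bar> \<le> (t / c) * norm y"
        proof
          fix y assume "y \<in> Y"
          then have "\<bar>blinfun_apply y w\<bar> \<le> t * norm y" using wt(2) by blast
          then show "\<bar>blinfun_apply y ((1 / c) *\<^sub>R w)\<bar> \<le> (t / c) * norm y"
            using c by (simp add: blinfun.scaleR_right abs_mult field_simps)
        qed
        have "c *\<^sub>R x - w = c *\<^sub>R (x - (1 / c) *\<^sub>R w)" using c by (simp add: algebra_simps)
        then have "sup_seminorm K (c *\<^sub>R x - w) = c * sup_seminorm K (x - (1 / c) *\<^sub>R w)"
          using psn_scale_eq[OF pb, of c] c by simp
        then have "v = c * (sup_seminorm K (x - (1 / c) *\<^sub>R w) / e + (t / c) / r)"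
          using wt(3) c by (simp add: field_simps)
        moreover have "sup_seminorm K (x - (1 / c) *\<^sub>R w) / e + (t / c) / r \<in> V x"
          using Vmem[OF _ w'] wt(1) c by simp
        ultimately show "v \<in> (\<lambda>v. c * v) ` V x" by blast
      next
        fix v assume "v \<in> (\<lambda>v. c * v) ` V x"
        then obtain w t where wt: "t \<ge> 0" "\<forall>y\<in>Y. \<bar>blinfun_apply y w\<bar> \<le> t * norm y"
          "v = c * (sup_seminorm K (x - w) / e + t / r)" unfolding V_def by blast
        have w': "\<forall>y\<in>Y. \<bar>blinfun_apply y (c *\<^sub>R w)\<bar> \<le> (c * t) * norm y"
        proof
          fix y assume "y \<in> Y"
          then have "\<bar>blinfun_apply y w\<bar> \<le> t * norm y" using wt(2) by blast
          then show "\<bar>blinfun_apply y (c *\<^sub>R w)\<bar> \<le> (c * t) * norm y"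
            using c by (simp add: blinfun.scaleR_right abs_mult mult.assoc mult_left_mono)
        qed
        have "c *\<^sub>R x - c *\<^sub>R w = c *\<^sub>R (x - w)" by (simp add: algebra_simps)
        then have "sup_seminorm K (c *\<^sub>R x - c *\<^sub>R w) = c * sup_seminorm K (x - w)"
          using psn_scale_eq[OF pb, of c] c by simp
        then have "v = sup_seminorm K (c *\<^sub>R x - c *\<^sub>R w) / e + (c * t) / r"
          using wt(3) c by (simp add: field_simps)
        moreover have "sup_seminorm K (c *\<^sub>R x - c *\<^sub>R w) / e + (c * t) / r \<in> V (c *\<^sub>R x)"
          using Vmem[OF _ w'] wt(1) c by simp
        ultimately show "v \<in> V (c *\<^sub>R x)" by simp
      qed
    next
      fix x1 x2 v1 v2 assume v1: "v1 \<in> V x1" and v2: "v2 \<in> V x2"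
      obtain w1 t1 where 1: "t1 \<ge> 0" "\<forall>y\<in>Y. \<bar>blinfun_apply y w1\<bar> \<le> t1 * norm y"
        "v1 = sup_seminorm K (x1 - w1) / e + t1 / r" using v1 unfolding V_def by blast
      obtain w2 t2 where 2: "t2 \<ge> 0" "\<forall>y\<in>Y. \<bar>blinfun_apply y w2\<bar> \<le> t2 * norm y"
        "v2 = sup_seminorm K (x2 - w2) / e + t2 / r" using v2 unfolding V_def by blast
      have w: "\<forall>y\<in>Y. \<bar>blinfun_apply y (w1 + w2)\<bar> \<le> (t1 + t2) * norm y"
      proof
        fix y assume y: "y \<in> Y"
        have "\<bar>blinfun_apply y (w1 + w2)\<bar> \<le> \<bar>blinfun_apply y w1\<bar> + \<bar>blinfun_apply y w2\<bar>"
          by (simp add: blinfun.add_right abs_triangle_ineq)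
        also have "\<dots> \<le> t1 * norm y + t2 * norm y" using 1(2) 2(2) y by (meson add_mono)
        finally show "\<bar>blinfun_apply y (w1 + w2)\<bar> \<le> (t1 + t2) * norm y" by (simp add: distrib_right)
      qed
      have "sup_seminorm K ((x1 + x2) - (w1 + w2)) \<le> sup_seminorm K (x1 - w1) + sup_seminorm K (x2 - w2)"
        using psn_triangle[OF pb, of "x1 - w1" "x2 - w2"] by (simp add: algebra_simps)
      then have "sup_seminorm K ((x1 + x2) - (w1 + w2)) / e \<le> (sup_seminorm K (x1 - w1) + sup_seminorm K (x2 - w2)) / e"
        using e by (intro divide_right_mono) auto
      then have "sup_seminorm K ((x1 + x2) - (w1 + w2)) / e + (t1 + t2) / r \<le> v1 + v2"
        using 1(3) 2(3) by (simp add: add_divide_distrib)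
      moreover have "sup_seminorm K ((x1 + x2) - (w1 + w2)) / e + (t1 + t2) / r \<in> V (x1 + x2)"
        using Vmem[OF _ w] 1(1) 2(1) by simp
      ultimately show "\<exists>d\<in>V (x1 + x2). d \<le> v1 + v2" by blast
    qed
    have qa: "1 \<le> q a"
      unfolding q_def
    proof (rule cInf_greatest[OF Vne])
      fix v assume "v \<in> V a"
      then obtain w t where wt: "t \<ge> 0" "\<forall>y\<in>Y. \<bar>blinfun_apply y w\<bar> \<le> t * norm y"
        "v = sup_seminorm K (a - w) / e + t / r" unfolding V_def by blast
      show "1 \<le> v"
      proof (rule ccontr)
        assume "\<not> 1 \<le> v"
        then have lt: "sup_seminorm K (a - w) / e + t / r < 1" using wt(3) by simp
        have "sup_seminorm K (a - w) / e \<ge> 0" using psn_nonneg[OF pb] e by simp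
        then have "t / r < 1" using lt by linarith
        then have tr: "t < r" using r by (simp add: field_simps)
        have "\<forall>y\<in>Y. \<bar>blinfun_apply y w\<bar> \<le> r * norm y"
          using wt(2) tr by (meson less_imp_le mult_right_mono norm_ge_zero order_trans)
        then have "e \<le> sup_seminorm K (w - a)" by (rule nb')
        moreover have "t / r \<ge> 0" using wt(1) r by simp
        then have "sup_seminorm K (a - w) / e < 1" using lt by linarith
        then have "sup_seminorm K (a - w) < e" using e by (simp add: field_simps)
        ultimately show False using psn_commute[OF pb, of w a] by simp
      qed
    qed
    obtain l where l: "linear l" "\<And>x. l x \<le> q x" "l a = q a"
      using hahn_banach_point[OF sl] by blast
    have l1: "l x \<le> sup_seminorm K x / e" for x
      using l(2)[of x] qle[of 0 0 x] by simp
    have l2: "l x \<le> norm x / r" for x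
    proof -
      have "\<forall>y\<in>Y. \<bar>blinfun_apply y x\<bar> \<le> norm x * norm y"
      proof
        fix y :: "'a \<Rightarrow>\<^sub>L real"
        show "\<bar>blinfun_apply y x\<bar> \<le> norm x * norm y" using norm_blinfun[of y x] by (simp add: mult.commute)
      qed
      then have "q x \<le> sup_seminorm K (x - x) / e + norm x / r" by (intro qle) auto
      then show ?thesis using l(2)[of x] psn_zero[OF pb] by simp
    qed
    have lneg: "l (- x) = - l x" for x by (rule linear_neg[OF l(1)])
    have l1a: "\<bar>l x\<bar> \<le> sup_seminorm K x / e" for x
      using l1[of x] l1[of "- x"] lneg[of x] psn_minus[OF pb, of x] by (simp add: abs_le_iff)
    have l2a: "\<bar>l x\<bar> \<le> norm x / r" for x
      using l2[of x] l2[of "- x"] lneg[of x] by (simp add: abs_le_iff)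
    have bl: "bounded_linear (\<lambda>x. e * l x)"
    proof (rule bounded_linear_intro[where K="e / r"])
      show "e * l (x + y) = e * l x + e * l y" for x y by (simp add: linear_add[OF l(1)] distrib_left)
      show "e * l (c *\<^sub>R x) = c *\<^sub>R (e * l x)" for c x by (simp add: linear_scale[OF l(1)])
      show "norm (e * l x) \<le> norm x * (e / r)" for x
      proof -
        have "e * \<bar>l x\<bar> \<le> e * (norm x / r)" using l2a[of x] e by (intro mult_left_mono) auto
        then show ?thesis using e by (simp add: abs_mult mult.commute)
      qed
    qed
    define \<psi> where "\<psi> = Blinfun (\<lambda>x. e * l x)"
    have psi_app: "blinfun_apply \<psi> x = e * l x" for x unfolding \<psi>_def using bounded_linear_Blinfun_apply[OF bl] by simp
    have "\<bar>blinfun_apply \<psi> x\<bar> \<le> sup_seminorm K x" for x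
      using l1a[of x] e unfolding psi_app by (simp add: abs_mult field_simps)
    then have psiK: "\<psi> \<in> K" by (rule bipolar[OF K])
    then have psiY: "\<psi> \<in> Y" using K unfolding mackey_family_def by auto
    have npsi: "norm \<psi> \<le> e / r"
      by (rule norm_blinfun_bound) (use e r l2a in \<open>auto simp: psi_app abs_mult field_simps\<close>)
    have "\<bar>phi F \<psi> - blinfun_apply \<psi> a\<bar> \<le> e / 4"
      by (rule phi_close[OF F Y K psiK A'(1) A'(2) a(2)])
    moreover have "e \<le> blinfun_apply \<psi> a" using qa l(3) e unfolding psi_app by simp
    moreover have "\<bar>phi F \<psi>\<bar> \<le> r0 * (e / r)"
      using bnd psiY npsi r0 by (meson mult_left_mono order_trans)
    moreover have "r0 * (e / r) \<le> e / 4"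
      unfolding r_def using e r0 by (simp add: field_simps)
    ultimately show False using e by linarith
  qed
qed

definition DD :: "('a::real_normed_vector \<Rightarrow>\<^sub>L real) set \<Rightarrow> real \<Rightarrow> 'a set" where
  "DD Y r = {x. \<forall>y\<in>Y. \<bar>blinfun_apply y x\<bar> \<le> r * norm y}"

lemma DD_closed:
  fixes Y :: "('a::real_normed_vector \<Rightarrow>\<^sub>L real) set"
  assumes Y: "subspace Y"
  shows "closedin (mackey_topology Y) (DD Y r)"
proof -
  have "openin (mackey_topology Y) (UNIV - DD Y r)"
  proof (subst openin_subopen, intro ballI)
    fix x assume "x \<in> UNIV - DD Y r"
    then obtain y where y: "y \<in> Y" "r * norm y < \<bar>blinfun_apply y x\<bar>" unfolding DD_def by (auto simp: not_le)
    define \<epsilon> where "\<epsilon> = \<bar>blinfun_apply y x\<bar> - r * norm y"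
    have Ks: "seg y \<in> mackey_family Y" using seg_family[OF Y y(1)] .
    have "x \<in> mball (seg y) x \<epsilon>" unfolding mball_def \<epsilon>_def using psn_zero[OF family_pb[OF Ks]] y(2) by simp
    moreover have "mball (seg y) x \<epsilon> \<subseteq> UNIV - DD Y r"
    proof
      fix z assume "z \<in> mball (seg y) x \<epsilon>"
      then have "\<bar>blinfun_apply y (z - x)\<bar> < \<epsilon>" unfolding mball_def seg_psn[OF Y y(1)] by simp
      then have "r * norm y < \<bar>blinfun_apply y z\<bar>" unfolding \<epsilon>_def blinfun.diff_right by linarith
      then show "z \<in> UNIV - DD Y r" using y(1) unfolding DD_def by (auto simp: not_le)
    qed
    ultimately show "\<exists>T. openin (mackey_topology Y) T \<and> x \<in> T \<and> T \<subseteq> UNIV - DD Y r"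
      using mball_open[OF Ks] by blast
  qed
  then show ?thesis unfolding closedin_def mackey_topspace[OF Y] by simp
qed

lemma DD_bounded:
  fixes Y :: "('a::banach \<Rightarrow>\<^sub>L real) set"
  assumes r: "r \<ge> 0"
  shows "mackey_bounded Y (DD Y r)"
  unfolding mackey_bounded_def
proof
  fix K assume K: "K \<in> mackey_family Y"
  obtain M where M: "\<forall>f\<in>K. norm f \<le> M" using family_norm_bound[OF K] by blast
  have "sup_seminorm K x \<le> r * M" if x: "x \<in> DD Y r" for x
  proof (rule psn_le[OF family_pb[OF K]])
    fix f assume f: "f \<in> K"
    then have "f \<in> Y" using K unfolding mackey_family_def by auto
    then have "\<bar>blinfun_apply f x\<bar> \<le> r * norm f" using x unfolding DD_def by blast
    also have "\<dots> \<le> r * M" using M f r by (intro mult_left_mono) auto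
    finally show "\<bar>blinfun_apply f x\<bar> \<le> r * M" .
  qed
  then show "\<exists>M. \<forall>x\<in>DD Y r. sup_seminorm K x \<le> M" by blast
qed

lemma quasi_imp_complete:
  fixes Y :: "('a::banach \<Rightarrow>\<^sub>L real) set"
  assumes Y: "subspace Y" "closed Y" and qc: "mackey_quasi_complete Y"
  shows "mackey_complete Y"
  unfolding mackey_complete_def mackey_complete_set_def
proof (intro allI impI)
  fix F assume "mackey_cauchy Y F \<and> eventually (\<lambda>x. x \<in> UNIV) F"
  then have F: "mackey_cauchy Y F" by simp
  have Fne: "F \<noteq> bot" using F unfolding mackey_cauchy_def by auto
  obtain r0 where r0: "r0 \<ge> 0" "\<forall>y\<in>Y. \<bar>phi F y\<bar> \<le> r0 * norm y"
    using phi_bounded[OF F Y] by blast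
  define r where "r = 4 * r0 + 1"
  have r: "r \<ge> 0" unfolding r_def using r0 by simp
  define D where "D = DD Y r"
  define I where "I = {(A, K, e). eventually (\<lambda>x. x \<in> A) F \<and> K \<in> mackey_family Y \<and> (e::real) > 0}"
  define S where "S = (\<lambda>(A, K, e). {b \<in> D. \<exists>a\<in>A. sup_seminorm K (b - a) < e})"
  define H where "H = (INF i\<in>I. principal (S i))"
  have s0: "seg (0 :: 'a \<Rightarrow>\<^sub>L real) \<in> mackey_family Y" using seg_family[OF Y(1) subspace_0[OF Y(1)]] .
  have Ine: "I \<noteq> {}" unfolding I_def using s0 by (intro ex_in_conv[THEN iffD1] exI[of _ "(UNIV, seg 0, 1)"]) auto
  have dir: "\<exists>k\<in>I. principal (S k) \<le> inf (principal (S i)) (principal (S j))" if ij: "i \<in> I" "j \<in> I" for i j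
  proof -
    obtain A1 K1 e1 where i: "i = (A1, K1, e1)" "eventually (\<lambda>x. x \<in> A1) F" "K1 \<in> mackey_family Y" "e1 > 0"
      using ij(1) unfolding I_def by auto
    obtain A2 K2 e2 where j: "j = (A2, K2, e2)" "eventually (\<lambda>x. x \<in> A2) F" "K2 \<in> mackey_family Y" "e2 > 0"
      using ij(2) unfolding I_def by auto
    have K3: "ksum K1 K2 \<in> mackey_family Y" "K1 \<subseteq> ksum K1 K2" "K2 \<subseteq> ksum K1 K2"
      using ksum_family[OF Y(1) i(3) j(3)] by auto
    have ne: "K1 \<noteq> {}" "K2 \<noteq> {}" using i(3) j(3) unfolding mackey_family_def by auto
    define k where "k = (A1 \<inter> A2, ksum K1 K2, min e1 e2)"
    have "k \<in> I" unfolding k_def I_def using i j K3 eventually_conj[OF i(2) j(2)] by auto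
    moreover have "S k \<subseteq> S i \<inter> S j"
    proof
      fix b assume "b \<in> S k"
      then obtain a where a: "b \<in> D" "a \<in> A1" "a \<in> A2" "sup_seminorm (ksum K1 K2) (b - a) < min e1 e2"
        unfolding S_def k_def by auto
      have "sup_seminorm K1 (b - a) \<le> sup_seminorm (ksum K1 K2) (b - a)"
        by (rule psn_mono[OF family_pb[OF K3(1)] K3(2) ne(1)])
      moreover have "sup_seminorm K2 (b - a) \<le> sup_seminorm (ksum K1 K2) (b - a)"
        by (rule psn_mono[OF family_pb[OF K3(1)] K3(3) ne(2)])
      ultimately have "sup_seminorm K1 (b - a) < e1" "sup_seminorm K2 (b - a) < e2" using a(4) by auto
      then show "b \<in> S i \<inter> S j" using a(1,2,3) unfolding S_def i(1) j(1) by auto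
    qed
    ultimately show ?thesis by auto
  qed
  have evH: "eventually P H \<longleftrightarrow> (\<exists>i\<in>I. eventually P (principal (S i)))" for P
    unfolding H_def by (rule eventually_INF_base[OF Ine dir])
  have SI: "S (A, K, e) \<noteq> {}" if AKe: "(A, K, e) \<in> I" for A K e
  proof -
    have "eventually (\<lambda>x. x \<in> A) F" "K \<in> mackey_family Y" "e > 0" using AKe unfolding I_def by auto
    then obtain b where "\<forall>y\<in>Y. \<bar>blinfun_apply y b\<bar> \<le> r * norm y" "\<exists>a\<in>A. sup_seminorm K (b - a) < e"
      using density[OF F Y(1) r0(1) r0(2)] unfolding r_def by blast
    then show ?thesis unfolding S_def D_def DD_def by auto
  qed
  have Hne: "H \<noteq> bot"
  proof
    assume "H = bot"
    then have "eventually (\<lambda>x. False) H" by simp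
    then obtain i where "i \<in> I" "eventually (\<lambda>x. False) (principal (S i))" using evH by blast
    then show False using SI by (cases i) (auto simp: eventually_principal)
  qed
  have SD: "S i \<subseteq> D" for i by (cases i) (auto simp: S_def)
  have HD: "eventually (\<lambda>x. x \<in> D) H"
  proof -
    obtain i where "i \<in> I" using Ine by blast
    moreover have "eventually (\<lambda>x. x \<in> D) (principal (S i))" using SD[of i] by (auto simp: eventually_principal)
    ultimately show ?thesis using evH by blast
  qed
  have Hc: "mackey_cauchy Y H"
    unfolding mackey_cauchy_def
  proof (intro conjI Hne ballI allI impI)
    fix K and e :: real assume K: "K \<in> mackey_family Y" and e: "e > 0"
    have pb: "pb K" using family_pb[OF K] .
    obtain A where A: "eventually (\<lambda>x. x \<in> A) F" "\<forall>x\<in>A. \<forall>x'\<in>A. sup_seminorm K (x - x') < e / 3"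
      using cauchy_small[OF F K, of "e / 3"] e by auto
    have iI: "(A, K, e / 3) \<in> I" unfolding I_def using A K e by auto
    have "eventually (\<lambda>x. x \<in> S (A, K, e / 3)) H"
      using evH iI by (auto simp: eventually_principal)
    moreover have "sup_seminorm K (x - x') < e" if "x \<in> S (A, K, e / 3)" "x' \<in> S (A, K, e / 3)" for x x'
    proof -
      note xx = that
      obtain a where a: "a \<in> A" "sup_seminorm K (x - a) < e / 3" using xx(1) unfolding S_def by auto
      obtain a' where a': "a' \<in> A" "sup_seminorm K (x' - a') < e / 3" using xx(2) unfolding S_def by auto
      have "sup_seminorm K (a - a') < e / 3" using A(2) a(1) a'(1) by blast
      moreover have "sup_seminorm K (a' - x') < e / 3" using a'(2) psn_commute[OF pb, of x' a'] by simp
      moreover have "sup_seminorm K (x - x') \<le> sup_seminorm K (x - a) + sup_seminorm K (a - a') + sup_seminorm K (a' - x')"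
        using psn_tri3[OF pb, of x x' a] psn_tri3[OF pb, of a x' a'] by linarith
      ultimately show ?thesis using a(2) by linarith
    qed
    ultimately show "\<exists>A. eventually (\<lambda>x. x \<in> A) H \<and> (\<forall>x\<in>A. \<forall>y\<in>A. sup_seminorm K (x - y) < e)"
      by blast
  qed
  have "mackey_complete_set Y D"
    using qc DD_bounded[OF r] DD_closed[OF Y(1)] unfolding mackey_quasi_complete_def D_def by blast
  then obtain x0 where x0: "x0 \<in> D" "mackey_converges Y H x0"
    using Hc HD unfolding mackey_complete_set_def by blast
  have "mackey_converges Y F x0"
    unfolding mackey_converges_def
  proof (intro ballI allI impI)
    fix K and e :: real assume K: "K \<in> mackey_family Y" and e: "e > 0"
    have pb: "pb K" using family_pb[OF K] .
    obtain A where A: "eventually (\<lambda>x. x \<in> A) F" "\<forall>x\<in>A. \<forall>x'\<in>A. sup_seminorm K (x - x') < e / 3"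
      using cauchy_small[OF F K, of "e / 3"] e by auto
    have iI: "(A, K, e / 3) \<in> I" unfolding I_def using A K e by auto
    have "eventually (\<lambda>x. x \<in> S (A, K, e / 3)) H"
      using evH iI by (auto simp: eventually_principal)
    moreover have "eventually (\<lambda>x. sup_seminorm K (x - x0) < e / 3) H"
      using x0(2) K e unfolding mackey_converges_def by (meson divide_pos_pos zero_less_numeral)
    ultimately have "eventually (\<lambda>x. x \<in> S (A, K, e / 3) \<and> sup_seminorm K (x - x0) < e / 3) H"
      by (rule eventually_conj)
    then obtain x where x: "x \<in> S (A, K, e / 3)" "sup_seminorm K (x - x0) < e / 3"
      using eventually_happens Hne by blast
    obtain a where a: "a \<in> A" "sup_seminorm K (x - a) < e / 3" using x(1) unfolding S_def by auto
    show "eventually (\<lambda>x. sup_seminorm K (x - x0) < e) F"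
    proof (rule eventually_mono[OF A(1)])
      fix a' assume a': "a' \<in> A"
      have "sup_seminorm K (a' - a) < e / 3" using A(2) a(1) a' by blast
      moreover have "sup_seminorm K (a - x) < e / 3" using a(2) psn_commute[OF pb, of x a] by simp
      moreover have "sup_seminorm K (a' - x0) \<le> sup_seminorm K (a' - a) + sup_seminorm K (a - x) + sup_seminorm K (x - x0)"
        using psn_tri3[OF pb, of a' x0 a] psn_tri3[OF pb, of a x0 x] by linarith
      ultimately show "sup_seminorm K (a' - x0) < e" using x(2) by linarith
    qed
  qed
  then show "\<exists>x0\<in>UNIV. mackey_converges Y F x0" by blast
qed

theorem proposition2p5:
  fixes Y :: "('a::banach \<Rightarrow>\<^sub>L real) set"
  assumes "subspace Y"
    and "closed Y"
    and "weak_star_topology closure_of Y = topspace weak_star_topology"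
  shows "mackey_quasi_complete Y \<longleftrightarrow> mackey_complete Y"
  using complete_imp_quasi[OF assms(1)] quasi_imp_complete[OF assms(1,2)] by blast

end
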